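(* Let $G_1,\ldots,G_n$ be finite non-empty vertex-transitive graphs ordered so that \[\tfrac12\geq\frac{\alpha(G_1)}{|V(G_1)|}=\cdots=\frac{\alpha(G_\ell)}{|V(G_\ell)|}>\frac{\alpha(G_{\ell+1})}{|V(G_{\ell+1})|}\geq\cdots\geq\frac{\alpha(G_n)}{|V(G_n)|},\] where $1\le \ell<n$. Let $H_0=G_1\times\cdots\times G_\ell$ and $G=G_1\times\cdots\times G_n$. Then $G$ is MIS-normal if and only if $H_0$ is MIS-normal and $G_{\ell+1},\ldots,G_n$ are all connected.
   Context: All graphs are finite and simple; a graph is non-empty if it has at least one edge; $\alpha(\cdot)$ is the independence number. The direct product $G\times H$ has vertex set $V(G)\times V(H)$, with $(u_1,v_1)$ adjacent to $(u_2,v_2)$ iff $u_1u_2\in E(G)$ and $v_1v_2\in E(H)$; it is associative, so products of several graphs are well defined. A product $G_1\times\cdots\times G_m$ is called MIS-normal if every maximum independent set of it is the preimage, under the projection onto some factor $G_i$, of an independent set of $G_i$; by convention a product with a single factor ($m=1$) is MIS-normal. *)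

theory Defs
  imports Complex_Main "HOL-Library.FuncSet"
begin

definition simple_graph :: "'v set \<Rightarrow> ('v \<Rightarrow> 'v \<Rightarrow> bool) \<Rightarrow> bool" where
  "simple_graph V E \<longleftrightarrow> finite V \<and>
     (\<forall>u w. E u w \<longrightarrow> u \<in> V \<and> w \<in> V) \<and>
     (\<forall>u w. E u w \<longrightarrow> E w u) \<and> (\<forall>u. \<not> E u u)"

definition nonempty_graph :: "'v set \<Rightarrow> ('v \<Rightarrow> 'v \<Rightarrow> bool) \<Rightarrow> bool" where
  "nonempty_graph V E \<longleftrightarrow> (\<exists>u\<in>V. \<exists>w\<in>V. E u w)"

definition graph_automorphism :: "'v set \<Rightarrow> ('v \<Rightarrow> 'v \<Rightarrow> bool) \<Rightarrow> ('v \<Rightarrow> 'v) \<Rightarrow> bool" where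
  "graph_automorphism V E f \<longleftrightarrow> bij_betw f V V \<and>
     (\<forall>u\<in>V. \<forall>w\<in>V. E u w \<longleftrightarrow> E (f u) (f w))"

definition vertex_transitive :: "'v set \<Rightarrow> ('v \<Rightarrow> 'v \<Rightarrow> bool) \<Rightarrow> bool" where
  "vertex_transitive V E \<longleftrightarrow>
     (\<forall>u\<in>V. \<forall>w\<in>V. \<exists>f. graph_automorphism V E f \<and> f u = w)"

definition connected_graph :: "'v set \<Rightarrow> ('v \<Rightarrow> 'v \<Rightarrow> bool) \<Rightarrow> bool" where
  "connected_graph V E \<longleftrightarrow> (\<forall>u\<in>V. \<forall>w\<in>V. (\<lambda>x y. x \<in> V \<and> y \<in> V \<and> E x y)\<^sup>*\<^sup>* u w)"

definition independent_set :: "'v set \<Rightarrow> ('v \<Rightarrow> 'v \<Rightarrow> bool) \<Rightarrow> 'v set \<Rightarrow> bool" where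
  "independent_set V E S \<longleftrightarrow> S \<subseteq> V \<and> (\<forall>u\<in>S. \<forall>w\<in>S. \<not> E u w)"

definition indep_number :: "'v set \<Rightarrow> ('v \<Rightarrow> 'v \<Rightarrow> bool) \<Rightarrow> nat" where
  "indep_number V E = Max (card ` {S. independent_set V E S})"

definition max_independent_set :: "'v set \<Rightarrow> ('v \<Rightarrow> 'v \<Rightarrow> bool) \<Rightarrow> 'v set \<Rightarrow> bool" where
  "max_independent_set V E S \<longleftrightarrow> independent_set V E S \<and> card S = indep_number V E"

definition prod_V :: "nat set \<Rightarrow> (nat \<Rightarrow> 'a set) \<Rightarrow> (nat \<Rightarrow> 'a) set" where
  "prod_V I V = PiE I V"

definition prod_E :: "nat set \<Rightarrow> (nat \<Rightarrow> 'a \<Rightarrow> 'a \<Rightarrow> bool) \<Rightarrow> (nat \<Rightarrow> 'a) \<Rightarrow> (nat \<Rightarrow> 'a) \<Rightarrow> bool" where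
  "prod_E I E x y \<longleftrightarrow> (\<forall>i\<in>I. E i (x i) (y i))"

text \<open>By convention a single-factor product is MIS-normal.\<close>
definition MIS_normal :: "nat set \<Rightarrow> (nat \<Rightarrow> 'a set) \<Rightarrow> (nat \<Rightarrow> 'a \<Rightarrow> 'a \<Rightarrow> bool) \<Rightarrow> bool" where
  "MIS_normal I V E \<longleftrightarrow> card I = 1 \<or>
     (\<forall>S. max_independent_set (prod_V I V) (prod_E I E) S \<longrightarrow>
        (\<exists>i\<in>I. \<exists>T. independent_set (V i) (E i) T \<and>
                   S = {x \<in> prod_V I V. x i \<in> T}))"

end

theory Submission
  imports Defs
begin


lemma indep_finite_set:
  assumes "finite V"
  shows "finite {S. independent_set V E S}"
  using assms by (rule finite_subset[rotated, OF finite_Pow_iff[THEN iffD2]]) (auto simp: independent_set_def)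

lemma card_le_indep:
  assumes "finite V" "independent_set V E S"
  shows "card S \<le> indep_number V E"
  unfolding indep_number_def
  using assms indep_finite_set[OF assms(1)] by (intro Max_ge) auto

lemma indep_empty: "independent_set V E {}"
  by (simp add: independent_set_def)

lemma exists_max_indep:
  assumes "finite V"
  obtains J where "max_independent_set V E J"
proof -
  have ne: "card ` {S. independent_set V E S} \<noteq> {}" using indep_empty by blast
  have "indep_number V E \<in> card ` {S. independent_set V E S}"
    unfolding indep_number_def using indep_finite_set[OF assms] ne by (intro Max_in) auto
  then obtain J where "independent_set V E J" "card J = indep_number V E" by auto
  then show ?thesis using that unfolding max_independent_set_def by auto
qed

lemma max_indep_iff:
  assumes "finite V"
  shows "max_independent_set V E S \<longleftrightarrow> independent_set V E S \<and> indep_number V E \<le> card S"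
  using card_le_indep[OF assms] unfolding max_independent_set_def by (auto intro: antisym)

definition nbr :: "'v set \<Rightarrow> ('v \<Rightarrow> 'v \<Rightarrow> bool) \<Rightarrow> 'v set \<Rightarrow> 'v set" where
  "nbr V E A = {x \<in> V. \<exists>a\<in>A. E a x}"

definition good :: "'v set \<Rightarrow> ('v \<Rightarrow> 'v \<Rightarrow> bool) \<Rightarrow> bool" where
  "good V E \<longleftrightarrow> finite V \<and> (\<forall>u\<in>V. \<forall>w\<in>V. E u w \<longrightarrow> E w u)"

definition nbhd_prop :: "'v set \<Rightarrow> ('v \<Rightarrow> 'v \<Rightarrow> bool) \<Rightarrow> bool" where
  "nbhd_prop V E \<longleftrightarrow> (\<forall>A. independent_set V E A \<longrightarrow>
      card A * card V \<le> indep_number V E * card (A \<union> nbr V E A))"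

locale giso =
  fixes V1 :: "'a set" and E1 and V2 :: "'b set" and E2 and \<phi> :: "'a \<Rightarrow> 'b"
  assumes bij: "bij_betw \<phi> V1 V2"
    and edge: "\<And>u w. u \<in> V1 \<Longrightarrow> w \<in> V1 \<Longrightarrow> E1 u w \<longleftrightarrow> E2 (\<phi> u) (\<phi> w)"
    and fin: "finite V1"
begin

lemma fin2: "finite V2" using bij fin bij_betw_finite by blast

lemma inj: "inj_on \<phi> V1" using bij bij_betw_def by blast

lemma ind_img: "independent_set V1 E1 S \<Longrightarrow> independent_set V2 E2 (\<phi> ` S)"
  using bij edge unfolding independent_set_def bij_betw_def by (auto, blast)

lemma ind_pre: "independent_set V2 E2 S \<Longrightarrow> independent_set V1 E1 {x\<in>V1. \<phi> x \<in> S}"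
  using edge unfolding independent_set_def by auto

lemma img_pre: "S \<subseteq> V2 \<Longrightarrow> \<phi> ` {x\<in>V1. \<phi> x \<in> S} = S"
  using bij unfolding bij_betw_def by auto

lemma card_pre: "S \<subseteq> V2 \<Longrightarrow> card {x\<in>V1. \<phi> x \<in> S} = card S"
proof -
  assume "S \<subseteq> V2"
  have "card (\<phi> ` {x\<in>V1. \<phi> x \<in> S}) = card {x\<in>V1. \<phi> x \<in> S}"
    by (rule card_image) (use inj in \<open>auto intro: inj_on_subset\<close>)
  then show ?thesis using img_pre[OF \<open>S \<subseteq> V2\<close>] by simp
qed

lemma indep_eq: "indep_number V1 E1 = indep_number V2 E2"
proof (rule antisym)
  obtain J where J: "max_independent_set V1 E1 J" using exists_max_indep[OF fin] by blast
  have "card (\<phi> ` J) = card J"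
    using J inj by (intro card_image) (auto simp: max_independent_set_def independent_set_def intro: inj_on_subset)
  then show "indep_number V1 E1 \<le> indep_number V2 E2"
    using card_le_indep[OF fin2 ind_img] J by (metis max_independent_set_def)
  obtain K where K: "max_independent_set V2 E2 K" using exists_max_indep[OF fin2] by blast
  have "K \<subseteq> V2" using K by (simp add: max_independent_set_def independent_set_def)
  then show "indep_number V2 E2 \<le> indep_number V1 E1"
    using card_le_indep[OF fin ind_pre] K card_pre by (metis max_independent_set_def)
qed

lemma max_pre: "max_independent_set V2 E2 S \<Longrightarrow> max_independent_set V1 E1 {x\<in>V1. \<phi> x \<in> S}"
  using ind_pre card_pre indep_eq unfolding max_independent_set_def independent_set_def
  by (metis (no_types, lifting))

lemma max_img: "max_independent_set V1 E1 S \<Longrightarrow> max_independent_set V2 E2 (\<phi> ` S)"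
proof -
  assume S: "max_independent_set V1 E1 S"
  have "card (\<phi> ` S) = card S"
    using S inj by (intro card_image) (auto simp: max_independent_set_def independent_set_def intro: inj_on_subset)
  then show ?thesis using S ind_img indep_eq by (simp add: max_independent_set_def)
qed

lemma pre_img: "S \<subseteq> V1 \<Longrightarrow> S = {x\<in>V1. \<phi> x \<in> \<phi> ` S}"
  using inj unfolding inj_on_def by auto

end




context
  fixes V :: "'v set" and E :: "'v \<Rightarrow> 'v \<Rightarrow> bool"
begin

lemma card_filter_sum: "finite X \<Longrightarrow> card {x\<in>X. P x} = (\<Sum>x\<in>X. if P x then 1 else 0::nat)"
  by (simp add: sum.If_cases Collect_conj_eq)

definition "Aut = {f \<in> V \<rightarrow>\<^sub>E V. graph_automorphism V E f}"

lemma Aut_finite: "finite V \<Longrightarrow> finite Aut"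
  unfolding Aut_def by (rule finite_subset[OF _ finite_PiE]) auto

lemma aut_restrict: "graph_automorphism V E f \<Longrightarrow> restrict f V \<in> Aut"
  unfolding Aut_def graph_automorphism_def
  by (auto simp: bij_betw_def inj_on_def intro!: restrict_PiE) 

lemma Aut_D: "f \<in> Aut \<Longrightarrow> bij_betw f V V \<and> (\<forall>u\<in>V. \<forall>w\<in>V. E u w \<longleftrightarrow> E (f u) (f w)) \<and> f \<in> V \<rightarrow>\<^sub>E V"
  unfolding Aut_def graph_automorphism_def by auto

lemma aut_comp: "f \<in> Aut \<Longrightarrow> g \<in> Aut \<Longrightarrow> restrict (f \<circ> g) V \<in> Aut"
proof (rule aut_restrict)
  assume f: "f \<in> Aut" and g: "g \<in> Aut"
  show "graph_automorphism V E (f \<circ> g)"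
    unfolding graph_automorphism_def
  proof (intro conjI ballI)
    show "bij_betw (f \<circ> g) V V" using Aut_D[OF f] Aut_D[OF g] bij_betw_trans by blast
    fix u w assume "u \<in> V" "w \<in> V"
    moreover have "g u \<in> V" "g w \<in> V" using Aut_D[OF g] \<open>u \<in> V\<close> \<open>w \<in> V\<close> by auto
    have e1: "E u w = E (g u) (g w)" using Aut_D[OF g] \<open>u \<in> V\<close> \<open>w \<in> V\<close> by blast
    have e2: "E (g u) (g w) = E (f (g u)) (f (g w))" using Aut_D[OF f] \<open>g u \<in> V\<close> \<open>g w \<in> V\<close> by blast
    show "E u w = E ((f \<circ> g) u) ((f \<circ> g) w)" using e1 e2 by simp
  qed
qed

lemma id_Aut: "restrict id V \<in> Aut"
  by (rule aut_restrict) (auto simp: graph_automorphism_def)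

definition "cnt a b = card {f \<in> Aut. f b = a}"

lemma cnt_left:
  assumes fin: "finite V" and vt: "vertex_transitive V E"
    and a: "a \<in> V" "a' \<in> V" and b: "b \<in> V"
  shows "cnt a b \<le> cnt a' b"
proof -
  obtain t where t: "graph_automorphism V E t" "t a = a'" using vt a unfolding vertex_transitive_def by blast
  define \<tau> where "\<tau> = restrict t V"
  have \<tau>: "\<tau> \<in> Aut" "\<tau> a = a'" using t aut_restrict a by (auto simp: \<tau>_def)
  let ?F = "\<lambda>f. restrict (\<tau> \<circ> f) V"
  have "inj_on ?F {f \<in> Aut. f b = a}"
  proof (rule inj_onI)
    fix f g assume f: "f \<in> {f \<in> Aut. f b = a}" and g: "g \<in> {f \<in> Aut. f b = a}" and eq: "?F f = ?F g"
    have "f x = g x" for x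
    proof (cases "x \<in> V")
      case True
      then have "\<tau> (f x) = \<tau> (g x)" using eq by (metis comp_apply restrict_apply')
      moreover have "f x \<in> V" "g x \<in> V" using f g True Aut_D[of f] Aut_D[of g] by auto
      ultimately show ?thesis using Aut_D[OF \<tau>(1)] by (auto simp: bij_betw_def inj_on_def)
    next
      case False then show ?thesis using f g Aut_D[of f] Aut_D[of g] by (auto simp: PiE_def extensional_def)
    qed
    then show "f = g" by auto
  qed
  moreover have "?F ` {f \<in> Aut. f b = a} \<subseteq> {f \<in> Aut. f b = a'}"
    using aut_comp[OF \<tau>(1)] \<tau>(2) b by auto
  ultimately show ?thesis unfolding cnt_def using Aut_finite[OF fin]
    by (intro card_inj_on_le[of ?F]) auto
qed

lemma cnt_right:
  assumes fin: "finite V" and vt: "vertex_transitive V E"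
    and a: "a \<in> V" and b: "b \<in> V" "b' \<in> V"
  shows "cnt a b \<le> cnt a b'"
proof -
  obtain t where t: "graph_automorphism V E t" "t b' = b" using vt b unfolding vertex_transitive_def by blast
  define \<tau> where "\<tau> = restrict t V"
  have \<tau>: "\<tau> \<in> Aut" "\<tau> b' = b" using t aut_restrict b by (auto simp: \<tau>_def)
  let ?F = "\<lambda>f. restrict (f \<circ> \<tau>) V"
  have "inj_on ?F {f \<in> Aut. f b = a}"
  proof (rule inj_onI)
    fix f g assume f: "f \<in> {f \<in> Aut. f b = a}" and g: "g \<in> {f \<in> Aut. f b = a}" and eq: "?F f = ?F g"
    have "f x = g x" for x
    proof (cases "x \<in> V")
      case True
      then have "x \<in> \<tau> ` V" using Aut_D[OF \<tau>(1)] by (simp add: bij_betw_def)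
      then obtain y where y: "y \<in> V" "\<tau> y = x" by blast
      then show ?thesis using eq by (metis comp_apply restrict_apply')
    next
      case False then show ?thesis using f g Aut_D[of f] Aut_D[of g] by (auto simp: PiE_def extensional_def)
    qed
    then show "f = g" by auto
  qed
  moreover have "?F ` {f \<in> Aut. f b = a} \<subseteq> {f \<in> Aut. f b' = a}"
    using aut_comp[OF _ \<tau>(1)] \<tau>(2) b by auto
  ultimately show ?thesis unfolding cnt_def using Aut_finite[OF fin]
    by (intro card_inj_on_le[of ?F]) auto
qed

lemma cnt_const:
  assumes fin: "finite V" and vt: "vertex_transitive V E"
    and "a \<in> V" "b \<in> V" "a' \<in> V" "b' \<in> V"
  shows "cnt a b = cnt a' b'"
proof -
  have "cnt a b \<le> cnt a' b" "cnt a' b \<le> cnt a' b'" "cnt a' b' \<le> cnt a b'" "cnt a b' \<le> cnt a b"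
    using cnt_left[OF fin vt] cnt_right[OF fin vt] assms by auto
  then show ?thesis by linarith
qed

lemma sum_count:
  assumes fin: "finite V" and vt: "vertex_transitive V E"
    and X: "X \<subseteq> V" and J: "J \<subseteq> V" and v0: "v0 \<in> V"
  shows "(\<Sum>f\<in>Aut. card (X \<inter> f ` J)) = card X * card J * cnt v0 v0"
proof -
  have finA: "finite Aut" using Aut_finite fin .
  have fX: "finite X" using X fin finite_subset by blast
  have fJ: "finite J" using J fin finite_subset by blast
  have "(\<Sum>f\<in>Aut. card (X \<inter> f ` J)) = (\<Sum>f\<in>Aut. \<Sum>x\<in>X. if x \<in> f ` J then 1 else 0)"
  proof (intro sum.cong refl)
    fix f have "X \<inter> f ` J = {x\<in>X. x \<in> f ` J}" by blast
    then show "card (X \<inter> f ` J) = (\<Sum>x\<in>X. if x \<in> f ` J then 1 else 0)"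
      using card_filter_sum[OF fX] by simp
  qed
  also have "\<dots> = (\<Sum>x\<in>X. \<Sum>f\<in>Aut. if x \<in> f ` J then 1 else 0)" by (rule sum.swap)
  also have "\<dots> = (\<Sum>x\<in>X. card {f \<in> Aut. x \<in> f ` J})"
    using card_filter_sum[OF finA] by simp
  also have "\<dots> = (\<Sum>x\<in>X. card J * cnt v0 v0)"
  proof (intro sum.cong refl)
    fix x assume x: "x \<in> X"
    have eq: "{f \<in> Aut. x \<in> f ` J} = (\<Union>b\<in>J. {f \<in> Aut. f b = x})" by auto
    have "card (\<Union>b\<in>J. {f \<in> Aut. f b = x}) = (\<Sum>b\<in>J. card {f \<in> Aut. f b = x})"
    proof (rule card_UN_disjoint[OF fJ])
      show "\<forall>i\<in>J. finite {f \<in> Aut. f i = x}" using finA by auto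
      show "\<forall>i\<in>J. \<forall>j\<in>J. i \<noteq> j \<longrightarrow> {f \<in> Aut. f i = x} \<inter> {f \<in> Aut. f j = x} = {}"
      proof (intro ballI impI)
        fix i j assume ij: "i \<in> J" "j \<in> J" "i \<noteq> j"
        show "{f \<in> Aut. f i = x} \<inter> {f \<in> Aut. f j = x} = {}"
        proof (rule ccontr)
          assume "{f \<in> Aut. f i = x} \<inter> {f \<in> Aut. f j = x} \<noteq> {}"
          then obtain f where f: "f \<in> Aut" "f i = x" "f j = x" by blast
          have "inj_on f V" using Aut_D[OF f(1)] bij_betw_def by blast
          moreover have "i \<in> V" "j \<in> V" using ij J by auto
          ultimately show False using f ij inj_on_def by metis
        qed
      qed
    qed
    also have "\<dots> = (\<Sum>b\<in>J. cnt v0 v0)"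
    proof (intro sum.cong refl)
      fix b assume "b \<in> J"
      then have "cnt x b = cnt v0 v0" using cnt_const[OF fin vt, of x b v0 v0] x X J v0 by blast
      then show "card {f \<in> Aut. f b = x} = cnt v0 v0" unfolding cnt_def .
    qed
    finally show "card {f \<in> Aut. x \<in> f ` J} = card J * cnt v0 v0" using eq by simp
  qed
  finally show ?thesis by simp
qed

lemma per_aut:
  assumes g: "good V E" and A: "independent_set V E A" and J: "max_independent_set V E J"
    and f: "f \<in> Aut"
  shows "card A \<le> card (A \<inter> f ` J) + card (nbr V E A \<inter> f ` J)"
proof -
  have fin: "finite V" using g unfolding good_def by blast
  have sym: "\<And>u w. u \<in> V \<Longrightarrow> w \<in> V \<Longrightarrow> E u w \<Longrightarrow> E w u" using g unfolding good_def by blast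
  have JV: "J \<subseteq> V" "independent_set V E J" using J unfolding max_independent_set_def independent_set_def by auto
  have AV: "A \<subseteq> V" using A unfolding independent_set_def by blast
  have bf: "bij_betw f V V" using Aut_D[OF f] by blast
  have fJV: "f ` J \<subseteq> V" using bij_betw_imp_surj_on[OF bf] JV by blast
  have inj: "inj_on f J" using bij_betw_imp_inj_on[OF bf] JV(1) by (rule inj_on_subset)
  have fJ: "independent_set V E (f ` J)" 
    unfolding independent_set_def
  proof (intro conjI ballI)
    show "f ` J \<subseteq> V" by (rule fJV)
    fix x y assume "x \<in> f ` J" "y \<in> f ` J"
    then obtain u w where "u \<in> J" "w \<in> J" "x = f u" "y = f w" by auto
    moreover have "u \<in> V" "w \<in> V" using JV \<open>u \<in> J\<close> \<open>w \<in> J\<close> by auto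
    moreover have "E (f u) (f w) = E u w" using Aut_D[OF f] \<open>u \<in> V\<close> \<open>w \<in> V\<close> by auto
    moreover have "\<not> E u w" using JV(2) \<open>u \<in> J\<close> \<open>w \<in> J\<close> unfolding independent_set_def by auto
    ultimately show "\<not> E x y" by simp
  qed
  have cfJ: "card (f ` J) = indep_number V E"
    using card_image[OF inj] J unfolding max_independent_set_def by simp
  let ?N = "nbr V E A"
  let ?U = "(f ` J - ?N) \<union> A"
  have U: "independent_set V E ?U"
    unfolding independent_set_def
  proof (intro conjI ballI)
    show "?U \<subseteq> V" using fJV AV by blast
    fix x y assume x: "x \<in> ?U" and y: "y \<in> ?U"
    show "\<not> E x y"
    proof
      assume e: "E x y"
      have xV: "x \<in> V" and yV: "y \<in> V" using x y fJV AV by auto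
      consider "x \<in> A" "y \<in> A" | "x \<in> A" "y \<in> f ` J - ?N" | "x \<in> f ` J - ?N" "y \<in> A"
        | "x \<in> f ` J - ?N" "y \<in> f ` J - ?N" using x y by blast
      then show False
      proof cases
        case 1 then show ?thesis using A e unfolding independent_set_def by blast
      next
        case 2 then have "y \<in> ?N" using e yV unfolding nbr_def by blast
        then show ?thesis using 2 by blast
      next
        case 3 then have "x \<in> ?N" using sym[OF xV yV e] xV unfolding nbr_def by blast
        then show ?thesis using 3 by blast
      next
        case 4 then show ?thesis using fJ e unfolding independent_set_def by blast
      qed
    qed
  qed
  have fU: "finite ?U" using fJV AV fin by (meson finite_subset Un_least Diff_subset subset_trans)
  have "card ?U \<le> indep_number V E" using card_le_indep[OF fin U] .
  moreover have "card (f ` J - ?N) + card (A - f ` J) \<le> card ?U"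
  proof -
    have "card ((f ` J - ?N) \<union> (A - f ` J)) = card (f ` J - ?N) + card (A - f ` J)"
      by (rule card_Un_disjoint) (use fU in \<open>auto intro: finite_subset\<close>)
    moreover have "card ((f ` J - ?N) \<union> (A - f ` J)) \<le> card ?U"
      by (rule card_mono[OF fU]) blast
    ultimately show ?thesis by simp
  qed
  moreover have "card (f ` J) = card (f ` J \<inter> ?N) + card (f ` J - ?N)"
    by (rule card_Int_Diff) (use fJV fin in \<open>rule finite_subset\<close>)
  moreover have "card (f ` J \<inter> ?N) = card (?N \<inter> f ` J)" by (simp add: Int_commute)
  moreover have "card A = card (A \<inter> f ` J) + card (A - f ` J)"
    by (rule card_Int_Diff) (use AV fin in \<open>rule finite_subset\<close>)
  ultimately show ?thesis using cfJ by linarith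
qed

lemma nbhd_lemma:
  assumes g: "good V E" and vt: "vertex_transitive V E"
  shows "nbhd_prop V E"
  unfolding nbhd_prop_def
proof (intro allI impI)
  fix A assume A: "independent_set V E A"
  have fin: "finite V" using g unfolding good_def by blast
  show "card A * card V \<le> indep_number V E * card (A \<union> nbr V E A)"
  proof (cases "indep_number V E = 0")
    case True
    then have "card A = 0" using card_le_indep[OF fin A] by simp
    then show ?thesis by simp
  next
    case False
    obtain J where J: "max_independent_set V E J" using exists_max_indep[OF fin] by blast
    have JV: "J \<subseteq> V" using J by (auto simp: max_independent_set_def independent_set_def)
    have cJ: "card J = indep_number V E" using J unfolding max_independent_set_def by blast
    then have "J \<noteq> {}" using False by auto
    then obtain v0 where v0: "v0 \<in> V" using JV by blast
    let ?c = "cnt v0 v0"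
    have cpos: "?c > 0"
    proof -
      have "restrict id V \<in> {f \<in> Aut. f v0 = v0}" using id_Aut v0 by auto
      moreover have "finite {f \<in> Aut. f v0 = v0}" using Aut_finite[OF fin] by simp
      ultimately show ?thesis unfolding cnt_def by (intro card_gt_0_iff[THEN iffD2] conjI) blast+
    qed
    have AV: "A \<subseteq> V" using A unfolding independent_set_def by blast
    have NV: "nbr V E A \<subseteq> V" by (auto simp: nbr_def)
    have s1: "(\<Sum>f\<in>Aut. card (A \<inter> f ` J)) = card A * card J * ?c" by (rule sum_count[OF fin vt AV JV v0])
    have s2: "(\<Sum>f\<in>Aut. card (nbr V E A \<inter> f ` J)) = card (nbr V E A) * card J * ?c" by (rule sum_count[OF fin vt NV JV v0])
    have s3: "(\<Sum>f\<in>Aut. card (V \<inter> f ` J)) = card V * card J * ?c" by (rule sum_count[OF fin vt subset_refl JV v0])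
    have sumeq: "(\<Sum>f\<in>Aut. card (V \<inter> f ` J)) = (\<Sum>f\<in>Aut. card J)"
    proof (intro sum.cong refl)
      fix f assume f: "f \<in> Aut"
      have bf: "bij_betw f V V" using Aut_D[OF f] by blast
      have inj: "inj_on f J" using bij_betw_imp_inj_on[OF bf] JV by (rule inj_on_subset)
      have "f ` J \<subseteq> V" using bij_betw_imp_surj_on[OF bf] JV by blast
      then have "V \<inter> f ` J = f ` J" by blast
      then show "card (V \<inter> f ` J) = card J" using card_image[OF inj] by simp
    qed
    have cA: "card Aut * card J = card V * card J * ?c"
    proof -
      have "card Aut * card J = (\<Sum>f\<in>Aut. card J)" by simp
      also have "\<dots> = (\<Sum>f\<in>Aut. card (V \<inter> f ` J))" using sumeq by simp
      also have "\<dots> = card V * card J * ?c" by (rule s3)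
      finally show ?thesis .
    qed
    have "(\<Sum>f\<in>Aut. card A) \<le> (\<Sum>f\<in>Aut. card (A \<inter> f ` J) + card (nbr V E A \<inter> f ` J))"
      by (rule sum_mono) (rule per_aut[OF g A J])
    also have "\<dots> = card A * card J * ?c + card (nbr V E A) * card J * ?c"
      by (simp only: sum.distrib s1 s2)
    finally have "card Aut * card A \<le> (card A + card (nbr V E A)) * (card J * ?c)"
      by (simp add: algebra_simps)
    then have "card Aut * card A * card J \<le> (card A + card (nbr V E A)) * (card J * ?c) * card J"
      by (rule mult_right_mono) simp
    moreover have "card Aut * card A * card J = card A * (card Aut * card J)" by (simp add: ac_simps)
    moreover have "card A * (card V * card J * ?c) = (card V * card A) * (card J * ?c)" by (simp add: ac_simps)
    moreover have "(card A + card (nbr V E A)) * (card J * ?c) * card J = ((card A + card (nbr V E A)) * card J) * (card J * ?c)" by (simp add: ac_simps)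
    ultimately have "(card V * card A) * (card J * ?c) \<le> ((card A + card (nbr V E A)) * card J) * (card J * ?c)"
      using cA by simp
    moreover have "card J * ?c > 0" using cpos \<open>J \<noteq> {}\<close> fin JV card_gt_0_iff finite_subset by fastforce
    ultimately have le: "card V * card A \<le> (card A + card (nbr V E A)) * card J"
      using mult_le_cancel2 by blast
    have "card (A \<union> nbr V E A) = card A + card (nbr V E A)"
    proof (rule card_Un_disjoint)
      show "finite A" using AV fin by (rule finite_subset)
      show "finite (nbr V E A)" using NV fin by (rule finite_subset)
      show "A \<inter> nbr V E A = {}" using A unfolding independent_set_def nbr_def by blast
    qed
    then show ?thesis using le cJ by (simp add: algebra_simps)
  qed
qed

end




definition pE :: "('a \<Rightarrow> 'a \<Rightarrow> bool) \<Rightarrow> ('b \<Rightarrow> 'b \<Rightarrow> bool) \<Rightarrow> 'a \<times> 'b \<Rightarrow> 'a \<times> 'b \<Rightarrow> bool" where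
  "pE EG EH p q \<longleftrightarrow> EG (fst p) (fst q) \<and> EH (snd p) (snd q)"

definition cl :: "'v set \<Rightarrow> ('v \<Rightarrow> 'v \<Rightarrow> bool) \<Rightarrow> 'v set \<Rightarrow> 'v set" where
  "cl V E A = A \<union> nbr V E A"

lemma card_fibres1:
  assumes "finite K" "\<And>v. v \<in> K \<Longrightarrow> finite (F v)"
  shows "card (\<Union>v\<in>K. F v \<times> {v}) = (\<Sum>v\<in>K. card (F v))"
proof -
  have "card (\<Union>v\<in>K. F v \<times> {v}) = (\<Sum>v\<in>K. card (F v \<times> {v}))"
    by (rule card_UN_disjoint) (use assms in auto)
  also have "\<dots> = (\<Sum>v\<in>K. card (F v))" by (simp add: card_cartesian_product)
  finally show ?thesis .
qed

lemma card_fibres2: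
  assumes "finite K" "\<And>v. v \<in> K \<Longrightarrow> finite (F v)"
  shows "card (\<Union>v\<in>K. {v} \<times> F v) = (\<Sum>v\<in>K. card (F v))"
proof -
  have "card (\<Union>v\<in>K. {v} \<times> F v) = (\<Sum>v\<in>K. card ({v} \<times> F v))"
    by (rule card_UN_disjoint) (use assms in auto)
  also have "\<dots> = (\<Sum>v\<in>K. card (F v))" by (simp add: card_cartesian_product)
  finally show ?thesis .
qed

lemma sum_eq_bound:
  assumes fin: "finite K" and le: "\<And>k. k \<in> K \<Longrightarrow> (f k::nat) \<le> c"
    and eq: "(\<Sum>k\<in>K. f k) = card K * c"
  shows "\<And>k. k \<in> K \<Longrightarrow> f k = c"
proof (rule ccontr)
  fix k assume k: "k \<in> K" and ne: "f k \<noteq> c"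
  then have "f k < c" using le by (simp add: order_less_le)
  then have "(\<Sum>k\<in>K. f k) < (\<Sum>k\<in>K. c)" using fin k le by (intro sum_strict_mono_ex1) auto
  then show False using eq by simp
qed

locale zh =
  fixes VG :: "'a set" and EG and VH :: "'b set" and EH and S
  assumes gX: "good VG EG" and gY: "good VH EH" and nX: "nbhd_prop VG EG" and nY: "nbhd_prop VH EH"
    and S: "independent_set (VG \<times> VH) (pE EG EH) S"
begin

lemma finX: "finite VG" using gX unfolding good_def by blast
lemma finY: "finite VH" using gY unfolding good_def by blast
lemma symX: "u \<in> VG \<Longrightarrow> w \<in> VG \<Longrightarrow> EG u w \<Longrightarrow> EG w u" using gX unfolding good_def by blast
lemma symY: "u \<in> VH \<Longrightarrow> w \<in> VH \<Longrightarrow> EH u w \<Longrightarrow> EH w u" using gY unfolding good_def by blast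
lemma SV: "S \<subseteq> VG \<times> VH" using S unfolding independent_set_def by blast
lemma Sind: "(u,v) \<in> S \<Longrightarrow> (u',v') \<in> S \<Longrightarrow> EG u u' \<Longrightarrow> EH v v' \<Longrightarrow> False"
  using S unfolding independent_set_def pE_def by fastforce
lemma finS: "finite S" using SV finX finY by (meson finite_SigmaI finite_subset)

definition "A = {p \<in> S. \<not> (\<exists>u'. (u', snd p) \<in> S \<and> EG (fst p) u')}"
definition "B = S - A"
definition "Af v = {u. (u,v) \<in> A}"
definition "Bf u = {v. (u,v) \<in> B}"
definition "NA = (\<Union>v\<in>VH. cl VG EG (Af v) \<times> {v})"
definition "NB = (\<Union>u\<in>VG. {u} \<times> cl VH EH (Bf u))"

lemma A_sub: "A \<subseteq> S" unfolding A_def by blast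
lemma B_sub: "B \<subseteq> S" unfolding B_def by blast

lemma inA: "(u,v) \<in> A \<longleftrightarrow> (u,v) \<in> S \<and> \<not> (\<exists>u'. (u', v) \<in> S \<and> EG u u')"
  unfolding A_def by simp

lemma B_h: "(u,v) \<in> B \<Longrightarrow> (u,v') \<in> S \<Longrightarrow> EH v v' \<Longrightarrow> False"
proof -
  assume b: "(u,v) \<in> B" and s: "(u,v') \<in> S" and e: "EH v v'"
  have uvS: "(u,v) \<in> S" and nA: "(u,v) \<notin> A" using b unfolding B_def by auto
  then obtain u' where u': "(u',v) \<in> S" "EG u u'" using inA by blast
  have "u \<in> VG" "u' \<in> VG" using uvS u'(1) SV by auto
  then have "EG u' u" using symX u'(2) by blast
  then show False using Sind[OF u'(1) s _ e] by blast
qed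

lemma Af_sub: "Af v \<subseteq> VG" using A_sub SV unfolding Af_def by blast
lemma Bf_sub: "Bf u \<subseteq> VH" using B_sub SV unfolding Bf_def by blast

lemma Af_ind: "independent_set VG EG (Af v)"
  unfolding independent_set_def
proof (intro conjI ballI)
  show "Af v \<subseteq> VG" by (rule Af_sub)
  fix u u' assume u: "u \<in> Af v" and u': "u' \<in> Af v"
  have "(u,v) \<in> A" "(u',v) \<in> A" using u u' unfolding Af_def by auto
  then show "\<not> EG u u'" using inA by blast
qed

lemma Bf_ind: "independent_set VH EH (Bf u)"
  unfolding independent_set_def
proof (intro conjI ballI)
  show "Bf u \<subseteq> VH" by (rule Bf_sub)
  fix v v' assume v: "v \<in> Bf u" and v': "v' \<in> Bf u"
  have "(u,v) \<in> B" "(u,v') \<in> B" using v v' unfolding Bf_def by auto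
  then show "\<not> EH v v'" using B_h B_sub by blast
qed

lemma A_eq: "A = (\<Union>v\<in>VH. Af v \<times> {v})"
  using A_sub SV unfolding Af_def by auto

lemma B_eq: "B = (\<Union>u\<in>VG. {u} \<times> Bf u)"
  using B_sub SV unfolding Bf_def by auto

lemma cl_sub: "cl V E X \<subseteq> V \<Longrightarrow> True" by simp

lemma clAf_sub: "cl VG EG (Af v) \<subseteq> VG" using Af_sub unfolding cl_def nbr_def by blast
lemma clBf_sub: "cl VH EH (Bf u) \<subseteq> VH" using Bf_sub unfolding cl_def nbr_def by blast

lemma cardA: "card A = (\<Sum>v\<in>VH. card (Af v))"
  unfolding A_eq by (rule card_fibres1[OF finY]) (use Af_sub finX in \<open>rule finite_subset\<close>)
lemma cardB: "card B = (\<Sum>u\<in>VG. card (Bf u))"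
  unfolding B_eq by (rule card_fibres2[OF finX]) (use Bf_sub finY in \<open>rule finite_subset\<close>)
lemma cardNA: "card NA = (\<Sum>v\<in>VH. card (cl VG EG (Af v)))"
  unfolding NA_def by (rule card_fibres1[OF finY]) (use clAf_sub finX in \<open>rule finite_subset\<close>)
lemma cardNB: "card NB = (\<Sum>u\<in>VG. card (cl VH EH (Bf u)))"
  unfolding NB_def by (rule card_fibres2[OF finX]) (use clBf_sub finY in \<open>rule finite_subset\<close>)

lemma NA_sub: "NA \<subseteq> VG \<times> VH" unfolding NA_def using clAf_sub by blast
lemma NB_sub: "NB \<subseteq> VG \<times> VH" unfolding NB_def using clBf_sub by blast

lemma disj: "NA \<inter> NB = {}"
proof (rule ccontr)
  assume "NA \<inter> NB \<noteq> {}"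
  then obtain x y where xy: "(x,y) \<in> NA" "(x,y) \<in> NB" by auto
  have x1: "x \<in> cl VG EG (Af y)" and yV: "y \<in> VH" using xy(1) unfolding NA_def by auto
  have y1: "y \<in> cl VH EH (Bf x)" and xV: "x \<in> VG" using xy(2) unfolding NB_def by auto
  have c1: "x \<in> Af y \<or> (\<exists>u'\<in>Af y. EG u' x)" using x1 unfolding cl_def nbr_def by blast
  have c2: "y \<in> Bf x \<or> (\<exists>v'\<in>Bf x. EH v' y)" using y1 unfolding cl_def nbr_def by blast
  show False
  proof (cases "x \<in> Af y")
    case xa: True
    have xyA: "(x,y) \<in> A" using xa unfolding Af_def by simp
    show ?thesis
    proof (cases "y \<in> Bf x")
      case True
      then have "(x,y) \<in> B" unfolding Bf_def by simp
      then show ?thesis using xyA unfolding B_def by blast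
    next
      case False
      then obtain v' where v': "v' \<in> Bf x" "EH v' y" using c2 by blast
      have xvB: "(x,v') \<in> B" using v'(1) unfolding Bf_def by simp
      then have "(x,v') \<in> S" "(x,v') \<notin> A" unfolding B_def by auto
      then obtain u'' where u'': "(u'',v') \<in> S" "EG x u''" using inA by blast
      have "x \<in> VG" "u'' \<in> VG" using u''(1) xV SV by auto
      then have "EG u'' x" using symX u''(2) by blast
      then show ?thesis using Sind[OF u''(1) _ _ v'(2)] xyA A_sub by blast
    qed
  next
    case xna: False
    then obtain u' where u': "u' \<in> Af y" "EG u' x" using c1 by blast
    have u'A: "(u',y) \<in> A" using u'(1) unfolding Af_def by simp
    show ?thesis
    proof (cases "y \<in> Bf x")
      case True
      then have "(x,y) \<in> S" using B_sub unfolding Bf_def by auto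
      then show ?thesis using u'A u'(2) inA by blast
    next
      case False
      then obtain v' where v': "v' \<in> Bf x" "EH v' y" using c2 by blast
      have "(x,v') \<in> S" using v'(1) B_sub unfolding Bf_def by auto
      have "v' \<in> VH" using v'(1) Bf_sub by blast
      then have "EH y v'" using symY yV v'(2) by blast
      then show ?thesis using Sind[OF _ \<open>(x,v') \<in> S\<close> u'(2)] u'A A_sub by blast
    qed
  qed
qed

lemma total: "card NA + card NB \<le> card VG * card VH"
proof -
  have "card NA + card NB = card (NA \<union> NB)"
    using disj NA_sub NB_sub finX finY
    by (intro card_Un_disjoint[symmetric]) (auto intro: finite_subset)
  also have "\<dots> \<le> card (VG \<times> VH)"
    using NA_sub NB_sub finX finY by (intro card_mono) auto
  finally show ?thesis by (simp add: card_cartesian_product)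
qed

lemma cardS: "card S = card A + card B"
proof -
  have SAB: "S = A \<union> B" using A_sub unfolding B_def by blast
  have "A \<inter> B = {}" unfolding B_def by blast
  moreover have "finite A" "finite B" using A_sub B_sub finS by (auto intro: finite_subset)
  ultimately have "card (A \<union> B) = card A + card B" by (intro card_Un_disjoint)
  then show ?thesis using SAB by simp
qed

abbreviation "aG \<equiv> indep_number VG EG"
abbreviation "aH \<equiv> indep_number VH EH"

lemma fibA: "v \<in> VH \<Longrightarrow> card (Af v) * card VG \<le> aG * card (cl VG EG (Af v))"
  using nX Af_ind unfolding nbhd_prop_def cl_def by blast
lemma fibB: "u \<in> VG \<Longrightarrow> card (Bf u) * card VH \<le> aH * card (cl VH EH (Bf u))"
  using nY Bf_ind unfolding nbhd_prop_def cl_def by blast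

lemma ineqA: "card A * card VG \<le> aG * card NA"
proof -
  have "card A * card VG = (\<Sum>v\<in>VH. card (Af v) * card VG)" unfolding cardA by (simp add: sum_distrib_right)
  also have "\<dots> \<le> (\<Sum>v\<in>VH. aG * card (cl VG EG (Af v)))" by (rule sum_mono) (rule fibA)
  also have "\<dots> = aG * card NA" unfolding cardNA by (simp add: sum_distrib_left)
  finally show ?thesis .
qed

lemma ineqB: "card B * card VH \<le> aH * card NB"
proof -
  have "card B * card VH = (\<Sum>u\<in>VG. card (Bf u) * card VH)" unfolding cardB by (simp add: sum_distrib_right)
  also have "\<dots> \<le> (\<Sum>u\<in>VG. aH * card (cl VH EH (Bf u)))" by (rule sum_mono) (rule fibB)
  also have "\<dots> = aH * card NB" unfolding cardNB by (simp add: sum_distrib_left)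
  finally show ?thesis .
qed

lemma bound: "card S \<le> max (aG * card VH) (aH * card VG)"
proof -
  define m where "m = max (aG * card VH) (aH * card VG)"
  define X where "X = card VG"
  define Y where "Y = card VH"
  have 1: "card A * X * Y \<le> m * card NA"
  proof -
    have "card A * X * Y \<le> aG * card NA * Y" using ineqA unfolding X_def by (rule mult_right_mono) simp
    also have "\<dots> = (aG * Y) * card NA" by (simp add: ac_simps)
    also have "\<dots> \<le> m * card NA" unfolding m_def Y_def by (rule mult_right_mono) simp_all
    finally show ?thesis .
  qed
  have 2: "card B * X * Y \<le> m * card NB"
  proof -
    have "card B * Y * X \<le> aH * card NB * X" using ineqB unfolding Y_def by (rule mult_right_mono) simp
    also have "\<dots> = (aH * X) * card NB" by (simp add: ac_simps)
    also have "\<dots> \<le> m * card NB" unfolding m_def X_def by (rule mult_right_mono) simp_all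
    finally show ?thesis by (simp add: ac_simps)
  qed
  have "card S * (X * Y) = card A * X * Y + card B * X * Y" using cardS by (simp add: algebra_simps)
  also have "\<dots> \<le> m * card NA + m * card NB" using 1 2 by (rule add_mono)
  also have "\<dots> = m * (card NA + card NB)" by (simp add: algebra_simps)
  also have "\<dots> \<le> m * (X * Y)" using total unfolding X_def Y_def by (rule mult_left_mono) simp
  finally have le: "card S * (X * Y) \<le> m * (X * Y)" .
  show ?thesis
  proof (cases "X * Y = 0")
    case True
    then have "VG = {} \<or> VH = {}" using finX finY unfolding X_def Y_def by auto
    then have "S = {}" using SV by auto
    then show ?thesis by simp
  next
    case False
    then show ?thesis using le unfolding m_def by simp
  qed
qed

lemma aG_le: "aG \<le> card VG"
proof -
  obtain J where J: "max_independent_set VG EG J" using exists_max_indep[OF finX] by blast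
  then have "J \<subseteq> VG" "card J = aG" unfolding max_independent_set_def independent_set_def by auto
  then show ?thesis using card_mono[OF finX] by metis
qed

lemma struct_main:
  assumes lt: "aH * card VG < aG * card VH" and eqS: "card S = aG * card VH"
    and conn: "connected_graph VH EH"
  shows "\<exists>J. max_independent_set VG EG J \<and> S = J \<times> VH"
proof -
  define X where "X = card VG"
  define Y where "Y = card VH"
  define K where "K = aG * Y"
  define L where "L = aH * X"
  have LK: "L < K" using lt unfolding K_def L_def X_def Y_def by simp
  then have Kpos: "K > 0" by simp
  then have aGpos: "aG > 0" and Ypos: "Y > 0" unfolding K_def by auto
  have Xpos: "X > 0" using aGpos aG_le unfolding X_def by linarith
  have 1: "card A * X * Y \<le> K * card NA"
  proof -
    have "card A * X * Y \<le> aG * card NA * Y" using ineqA unfolding X_def by (rule mult_right_mono) simp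
    also have "\<dots> = K * card NA" unfolding K_def by (simp add: ac_simps)
    finally show ?thesis .
  qed
  have 2: "card B * X * Y \<le> L * card NB"
  proof -
    have "card B * Y * X \<le> aH * card NB * X" using ineqB unfolding Y_def by (rule mult_right_mono) simp
    also have "\<dots> = L * card NB" unfolding L_def by (simp add: ac_simps)
    finally show ?thesis by (simp add: ac_simps)
  qed
  have "K * (X * Y) = card S * (X * Y)" using eqS unfolding K_def Y_def by simp
  also have "\<dots> = card A * X * Y + card B * X * Y" using cardS by (simp add: algebra_simps)
  also have "\<dots> \<le> K * card NA + L * card NB" using 1 2 by (rule add_mono)
  finally have main: "K * (X * Y) \<le> K * card NA + L * card NB" .
  have tot: "card NA + card NB \<le> X * Y" using total unfolding X_def Y_def .
  have q0: "card NB = 0"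
  proof (rule ccontr)
    assume "card NB \<noteq> 0"
    then have "L * card NB < K * card NB" using LK by simp
    then have "K * (X * Y) < K * card NA + K * card NB" using main by linarith
    also have "\<dots> = K * (card NA + card NB)" by (simp add: algebra_simps)
    also have "\<dots> \<le> K * (X * Y)" using tot by (rule mult_left_mono) simp
    finally show False by simp
  qed
  have finNB: "finite NB" using NB_sub finX finY by (meson finite_SigmaI finite_subset)
  have NB0: "NB = {}" using q0 finNB by simp
  have B0: "B = {}"
  proof (rule ccontr)
    assume "B \<noteq> {}"
    then obtain u v where uv: "(u,v) \<in> B" by auto
    then have "u \<in> VG" using B_sub SV by auto
    moreover have "v \<in> cl VH EH (Bf u)" using uv unfolding Bf_def cl_def by simp
    ultimately have "(u,v) \<in> NB" unfolding NB_def by blast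
    then show False using NB0 by simp
  qed
  have SA: "S = A" using B0 A_sub unfolding B_def by blast
  have "K * (X * Y) \<le> K * card NA" using main q0 by simp
  then have "X * Y \<le> card NA" using Kpos by simp
  then have pXY: "card NA = card VH * X" using tot q0 unfolding Y_def by (simp add: ac_simps)
  have clle: "\<And>v. v \<in> VH \<Longrightarrow> card (cl VG EG (Af v)) \<le> X"
    unfolding X_def using clAf_sub finX by (simp add: card_mono)
  have cleq: "\<And>v. v \<in> VH \<Longrightarrow> card (cl VG EG (Af v)) = X"
    using sum_eq_bound[of VH "\<lambda>v. card (cl VG EG (Af v))" X, OF finY clle] pXY cardNA by simp
  have clV: "\<And>v. v \<in> VH \<Longrightarrow> cl VG EG (Af v) = VG"
    using cleq clAf_sub finX unfolding X_def by (metis card_subset_eq)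
  have Afle: "\<And>v. v \<in> VH \<Longrightarrow> card (Af v) \<le> aG"
  proof -
    fix v assume v: "v \<in> VH"
    have "card (Af v) * X \<le> aG * X" using fibA[OF v] cleq[OF v] unfolding X_def by simp
    then show "card (Af v) \<le> aG" using Xpos by simp
  qed
  have "(\<Sum>v\<in>VH. card (Af v)) = card VH * aG"
    using cardA cardS B0 eqS by (simp add: ac_simps)
  then have Afeq: "\<And>v. v \<in> VH \<Longrightarrow> card (Af v) = aG"
    using sum_eq_bound[of VH "\<lambda>v. card (Af v)" aG, OF finY Afle] by simp
  have Afmax: "\<And>v. v \<in> VH \<Longrightarrow> max_independent_set VG EG (Af v)"
    unfolding max_independent_set_def using Af_ind Afeq by blast
  have finAf: "\<And>v. finite (Af v)" using Af_sub finX by (rule finite_subset)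
  have adj: "\<And>v w. v \<in> VH \<Longrightarrow> w \<in> VH \<Longrightarrow> EH v w \<Longrightarrow> Af w = Af v"
  proof -
    fix v w assume v: "v \<in> VH" and w: "w \<in> VH" and e: "EH v w"
    have "Af w \<subseteq> Af v"
    proof
      fix u' assume u': "u' \<in> Af w"
      then have "u' \<in> cl VG EG (Af v)" using clV[OF v] Af_sub by blast
      then have "u' \<in> Af v \<or> (\<exists>u\<in>Af v. EG u u')" unfolding cl_def nbr_def by blast
      moreover have "\<not> (\<exists>u\<in>Af v. EG u u')"
      proof
        assume "\<exists>u\<in>Af v. EG u u'"
        then obtain u where u: "u \<in> Af v" "EG u u'" by blast
        have "(u,v) \<in> S" "(u',w) \<in> S" using u(1) u' A_sub unfolding Af_def by auto
        then show False using Sind u(2) e by blast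
      qed
      ultimately show "u' \<in> Af v" by blast
    qed
    moreover have "card (Af w) = card (Af v)" using Afeq v w by simp
    ultimately show "Af w = Af v" using finAf by (metis card_subset_eq)
  qed
  obtain v0 where v0: "v0 \<in> VH" using Ypos unfolding Y_def by (metis card.empty ex_in_conv less_irrefl)
  have const: "\<And>w. w \<in> VH \<Longrightarrow> Af w = Af v0"
  proof -
    fix w assume w: "w \<in> VH"
    have path: "(\<lambda>x y. x \<in> VH \<and> y \<in> VH \<and> EH x y)\<^sup>*\<^sup>* v0 w"
      using conn v0 w unfolding connected_graph_def by blast
    show "Af w = Af v0"
      using path
    proof (induction rule: rtranclp_induct)
      case base then show ?case by simp
    next
      case (step y z)
      then have "Af z = Af y" using adj by blast
      then show ?case using step.IH by simp
    qed
  qed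
  have "S = Af v0 \<times> VH"
  proof
    show "S \<subseteq> Af v0 \<times> VH"
    proof
      fix p assume p: "p \<in> S"
      obtain u v where [simp]: "p = (u,v)" by (cases p)
      have v: "v \<in> VH" using p SV by auto
      have "u \<in> Af v" using p SA unfolding Af_def by simp
      then show "p \<in> Af v0 \<times> VH" using const[OF v] v by simp
    qed
    show "Af v0 \<times> VH \<subseteq> S"
    proof
      fix p assume p: "p \<in> Af v0 \<times> VH"
      obtain u v where [simp]: "p = (u,v)" by (cases p)
      have v: "v \<in> VH" using p by auto
      have "u \<in> Af v" using p const[OF v] by simp
      then show "p \<in> S" using SA unfolding Af_def by simp
    qed
  qed
  then show ?thesis using Afmax[OF v0] by blast
qed

end

lemma pE_indep1:
  assumes "independent_set VG EG J" 
  shows "independent_set (VG \<times> VH) (pE EG EH) (J \<times> VH)"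
  using assms unfolding independent_set_def pE_def by auto

lemma pE_indep2:
  assumes "independent_set VH EH J"
  shows "independent_set (VG \<times> VH) (pE EG EH) (VG \<times> J)"
  using assms unfolding independent_set_def pE_def by auto

lemma pE_good:
  assumes "good VG EG" "good VH EH"
  shows "good (VG \<times> VH) (pE EG EH)"
  using assms unfolding good_def pE_def by auto

lemma zhang_eq:
  assumes gG: "good VG EG" and gH: "good VH EH" and nG: "nbhd_prop VG EG" and nH: "nbhd_prop VH EH"
  shows "indep_number (VG \<times> VH) (pE EG EH) =
    max (indep_number VG EG * card VH) (indep_number VH EH * card VG)"
proof (rule antisym)
  have finG: "finite VG" and finH: "finite VH" using gG gH unfolding good_def by auto
  have finP: "finite (VG \<times> VH)" using finG finH by simp
  obtain S where Sm: "max_independent_set (VG \<times> VH) (pE EG EH) S" using exists_max_indep[OF finP] by blast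
  interpret zh VG EG VH EH S
    using gG gH nG nH Sm unfolding max_independent_set_def by unfold_locales auto
  have cS: "card S = indep_number (VG \<times> VH) (pE EG EH)" using Sm unfolding max_independent_set_def by blast
  show "indep_number (VG \<times> VH) (pE EG EH) \<le> max (indep_number VG EG * card VH) (indep_number VH EH * card VG)"
    using bound cS by simp
  obtain J where J: "max_independent_set VG EG J" using exists_max_indep[OF finG] by blast
  obtain J' where J': "max_independent_set VH EH J'" using exists_max_indep[OF finH] by blast
  have "card (J \<times> VH) \<le> indep_number (VG \<times> VH) (pE EG EH)"
    using card_le_indep[OF finP pE_indep1] J unfolding max_independent_set_def by blast
  moreover have "card (VG \<times> J') \<le> indep_number (VG \<times> VH) (pE EG EH)"
    using card_le_indep[OF finP pE_indep2] J' unfolding max_independent_set_def by blast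
  ultimately show "max (indep_number VG EG * card VH) (indep_number VH EH * card VG) \<le> indep_number (VG \<times> VH) (pE EG EH)"
    using J J' unfolding max_independent_set_def by (simp add: card_cartesian_product ac_simps)
qed

lemma zhang_max:
  assumes gG: "good VG EG" and gH: "good VH EH" and nG: "nbhd_prop VG EG" and nH: "nbhd_prop VH EH"
    and J: "max_independent_set VG EG J"
    and le: "indep_number VH EH * card VG \<le> indep_number VG EG * card VH"
  shows "max_independent_set (VG \<times> VH) (pE EG EH) (J \<times> VH)"
proof -
  have "card (J \<times> VH) = indep_number VG EG * card VH"
    using J unfolding max_independent_set_def by (simp add: card_cartesian_product)
  moreover have "independent_set (VG \<times> VH) (pE EG EH) (J \<times> VH)"
    using J unfolding max_independent_set_def by (intro pE_indep1) blast
  moreover have "indep_number (VG \<times> VH) (pE EG EH) = indep_number VG EG * card VH"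
    using zhang_eq[OF gG gH nG nH] le by simp
  ultimately show ?thesis unfolding max_independent_set_def by simp
qed

lemma zhang_struct:
  assumes gG: "good VG EG" and gH: "good VH EH" and nG: "nbhd_prop VG EG" and nH: "nbhd_prop VH EH"
    and Sm: "max_independent_set (VG \<times> VH) (pE EG EH) S"
    and lt: "indep_number VH EH * card VG < indep_number VG EG * card VH"
    and conn: "connected_graph VH EH"
  shows "\<exists>J. max_independent_set VG EG J \<and> S = J \<times> VH"
proof -
  interpret zh VG EG VH EH S
    using gG gH nG nH Sm unfolding max_independent_set_def by unfold_locales auto
  have cS: "card S = indep_number (VG \<times> VH) (pE EG EH)" using Sm unfolding max_independent_set_def by blast
  have "card S = indep_number VG EG * card VH"
    using cS zhang_eq[OF gG gH nG nH] lt by simp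
  then show ?thesis using struct_main lt conn by blast
qed




lemma simple_good: "simple_graph V E \<Longrightarrow> good V E"
  unfolding simple_graph_def good_def by blast

lemma upd_PiE: "y \<in> PiE K V \<Longrightarrow> a \<in> V i \<Longrightarrow> y(i := a) \<in> PiE (insert i K) V"
  unfolding PiE_iff extensional_def by auto

lemma prod_good:
  assumes "finite K" "\<And>i. i \<in> K \<Longrightarrow> good (V i) (E i)"
  shows "good (prod_V K V) (prod_E K E)"
  unfolding good_def prod_V_def
proof (intro conjI ballI impI)
  show "finite (PiE K V)" using assms unfolding good_def by (intro finite_PiE) auto
  fix u w assume u: "u \<in> PiE K V" and w: "w \<in> PiE K V" and e: "prod_E K E u w"
  show "prod_E K E w u" unfolding prod_E_def
  proof
    fix i assume i: "i \<in> K"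
    have "u i \<in> V i" "w i \<in> V i" using u w i by auto
    moreover have "E i (u i) (w i)" using e i unfolding prod_E_def by blast
    ultimately show "E i (w i) (u i)" using assms(2)[OF i] unfolding good_def by blast
  qed
qed

lemma prod_vt:
  assumes vt: "\<And>i. i \<in> K \<Longrightarrow> vertex_transitive (V i) (E i)"
  shows "vertex_transitive (prod_V K V) (prod_E K E)"
  unfolding vertex_transitive_def prod_V_def
proof (intro ballI)
  fix x y assume x: "x \<in> PiE K V" and y: "y \<in> PiE K V"
  have "\<forall>i\<in>K. \<exists>f. graph_automorphism (V i) (E i) f \<and> f (x i) = y i"
    using vt x y unfolding vertex_transitive_def by (meson PiE_mem)
  then obtain F where F: "\<And>i. i \<in> K \<Longrightarrow> graph_automorphism (V i) (E i) (F i) \<and> F i (x i) = y i"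
    by metis
  have bijF: "\<And>i. i \<in> K \<Longrightarrow> bij_betw (F i) (V i) (V i)" using F unfolding graph_automorphism_def by blast
  have edF: "\<And>i u w. i \<in> K \<Longrightarrow> u \<in> V i \<Longrightarrow> w \<in> V i \<Longrightarrow> E i u w \<longleftrightarrow> E i (F i u) (F i w)"
    using F unfolding graph_automorphism_def by blast
  define \<Phi> where "\<Phi> z = restrict (\<lambda>i. F i (z i)) K" for z
  have into: "\<And>z. z \<in> PiE K V \<Longrightarrow> \<Phi> z \<in> PiE K V"
  proof -
    fix z assume z: "z \<in> PiE K V"
    show "\<Phi> z \<in> PiE K V" unfolding \<Phi>_def restrict_PiE_iff
    proof
      fix i assume i: "i \<in> K"
      then show "F i (z i) \<in> V i" using bij_betw_apply[OF bijF[OF i]] z by auto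
    qed
  qed
  have inj: "inj_on \<Phi> (PiE K V)"
  proof (rule inj_onI)
    fix z z' assume z: "z \<in> PiE K V" and z': "z' \<in> PiE K V" and eq: "\<Phi> z = \<Phi> z'"
    show "z = z'"
    proof (rule PiE_ext[OF z z'])
      fix i assume i: "i \<in> K"
      have "F i (z i) = F i (z' i)" using eq i unfolding \<Phi>_def by (metis restrict_apply')
      moreover have "z i \<in> V i" "z' i \<in> V i" using z z' i by auto
      ultimately show "z i = z' i" using bij_betw_imp_inj_on[OF bijF[OF i]] unfolding inj_on_def by blast
    qed
  qed
  have surj: "PiE K V \<subseteq> \<Phi> ` PiE K V"
  proof
    fix w assume w: "w \<in> PiE K V"
    define z where "z = restrict (\<lambda>i. inv_into (V i) (F i) (w i)) K"
    have wi: "\<And>i. i \<in> K \<Longrightarrow> w i \<in> F i ` V i" using w bijF unfolding bij_betw_def by auto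
    have z: "z \<in> PiE K V" unfolding z_def restrict_PiE_iff using wi by (auto intro: inv_into_into)
    have "\<Phi> z = w"
    proof (rule PiE_ext[OF into[OF z] w])
      fix i assume i: "i \<in> K"
      show "\<Phi> z i = w i" unfolding \<Phi>_def z_def using i wi[OF i] by (simp add: f_inv_into_f)
    qed
    then show "w \<in> \<Phi> ` PiE K V" using z by blast
  qed
  have bij: "bij_betw \<Phi> (PiE K V) (PiE K V)"
    unfolding bij_betw_def using inj surj into by blast
  have ed: "\<forall>u\<in>PiE K V. \<forall>w\<in>PiE K V. prod_E K E u w \<longleftrightarrow> prod_E K E (\<Phi> u) (\<Phi> w)"
  proof (intro ballI)
    fix u w assume u: "u \<in> PiE K V" and w: "w \<in> PiE K V"
    have "prod_E K E u w \<longleftrightarrow> (\<forall>i\<in>K. E i (u i) (w i))" unfolding prod_E_def ..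
    also have "\<dots> \<longleftrightarrow> (\<forall>i\<in>K. E i (F i (u i)) (F i (w i)))"
    proof (intro ball_cong refl)
      fix i assume i: "i \<in> K"
      show "E i (u i) (w i) \<longleftrightarrow> E i (F i (u i)) (F i (w i))" using edF[OF i] u w i by auto
    qed
    also have "\<dots> \<longleftrightarrow> prod_E K E (\<Phi> u) (\<Phi> w)" unfolding prod_E_def \<Phi>_def by simp
    finally show "prod_E K E u w \<longleftrightarrow> prod_E K E (\<Phi> u) (\<Phi> w)" .
  qed
  have "\<Phi> x = y"
  proof (rule PiE_ext[OF into[OF x] y])
    fix i assume i: "i \<in> K"
    show "\<Phi> x i = y i" unfolding \<Phi>_def using F[OF i] i by simp
  qed
  then show "\<exists>f. graph_automorphism (PiE K V) (prod_E K E) f \<and> f x = y"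
    using bij ed unfolding graph_automorphism_def by blast
qed

lemma step_iso:
  assumes iK: "i \<notin> K" and fin: "finite (prod_V (insert i K) V)"
  shows "giso (prod_V (insert i K) V) (prod_E (insert i K) E) (prod_V K V \<times> V i) (pE (prod_E K E) (E i))
     (\<lambda>x. (restrict x K, x i))"
proof
  show "finite (prod_V (insert i K) V)" by (rule fin)
  show "bij_betw (\<lambda>x. (restrict x K, x i)) (prod_V (insert i K) V) (prod_V K V \<times> V i)"
    unfolding prod_V_def
  proof (rule bij_betw_byWitness[where f' = "\<lambda>(y,a). y(i := a)"])
    show "\<forall>a\<in>PiE (insert i K) V. (\<lambda>(y, a). y(i := a)) (restrict a K, a i) = a"
    proof
      fix x assume x: "x \<in> PiE (insert i K) V"
      show "(\<lambda>(y, a). y(i := a)) (restrict x K, x i) = x"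
      proof
        fix j show "((\<lambda>(y, a). y(i := a)) (restrict x K, x i)) j = x j"
          using x by (cases "j = i"; cases "j \<in> K") (auto simp: PiE_iff extensional_def)
      qed
    qed
    show "\<forall>a'\<in>PiE K V \<times> V i. (\<lambda>x. (restrict x K, x i)) ((\<lambda>(y, a). y(i := a)) a') = a'"
    proof
      fix p assume p: "p \<in> PiE K V \<times> V i"
      obtain y a where [simp]: "p = (y,a)" by (cases p)
      have y: "y \<in> PiE K V" using p by simp
      have "restrict (y(i := a)) K = y"
      proof
        fix j show "restrict (y(i := a)) K j = y j"
          using y iK by (cases "j \<in> K") (auto simp: PiE_iff extensional_def)
      qed
      then show "(\<lambda>x. (restrict x K, x i)) ((\<lambda>(y, a). y(i := a)) p) = p" by simp
    qed
    show "(\<lambda>x. (restrict x K, x i)) ` PiE (insert i K) V \<subseteq> PiE K V \<times> V i"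
      by (auto simp: PiE_iff)
    show "(\<lambda>(y, a). y(i := a)) ` (PiE K V \<times> V i) \<subseteq> PiE (insert i K) V"
    proof
      fix q assume "q \<in> (\<lambda>(y, a). y(i := a)) ` (PiE K V \<times> V i)"
      then obtain y a where "y \<in> PiE K V" "a \<in> V i" "q = y(i := a)" by auto
      then show "q \<in> PiE (insert i K) V" using upd_PiE by metis
    qed
  qed
  fix u w assume u: "u \<in> prod_V (insert i K) V" and w: "w \<in> prod_V (insert i K) V"
  show "prod_E (insert i K) E u w \<longleftrightarrow> pE (prod_E K E) (E i) (restrict u K, u i) (restrict w K, w i)"
    unfolding pE_def prod_E_def by auto
qed




locale mctx =
  fixes V :: "nat \<Rightarrow> 'a set" and E :: "nat \<Rightarrow> 'a \<Rightarrow> 'a \<Rightarrow> bool"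
    and n l :: nat
  assumes graphs: "\<And>i. i \<in> {1..n} \<Longrightarrow> simple_graph (V i) (E i)"
    and nonempty: "\<And>i. i \<in> {1..n} \<Longrightarrow> nonempty_graph (V i) (E i)"
    and vt: "\<And>i. i \<in> {1..n} \<Longrightarrow> vertex_transitive (V i) (E i)"
    and l_range: "1 \<le> l" "l < n"
    and eq_first: "\<And>i. i \<in> {1..l} \<Longrightarrow>
        real (indep_number (V i) (E i)) / real (card (V i))
        = real (indep_number (V 1) (E 1)) / real (card (V 1))"
    and gap: "real (indep_number (V l) (E l)) / real (card (V l))
        > real (indep_number (V (l+1)) (E (l+1))) / real (card (V (l+1)))"
    and decr: "\<And>i. i \<in> {l+1..<n} \<Longrightarrow>
        real (indep_number (V i) (E i)) / real (card (V i))
        \<ge> real (indep_number (V (i+1)) (E (i+1))) / real (card (V (i+1)))"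
begin

definition "rat i = real (indep_number (V i) (E i)) / real (card (V i))"
abbreviation "r \<equiv> rat 1"
abbreviation "PV m \<equiv> prod_V {1..m} V"
abbreviation "PE m \<equiv> prod_E {1..m} E"

lemma finV: "i \<in> {1..n} \<Longrightarrow> finite (V i)" using graphs unfolding simple_graph_def by blast

lemma Vne: "i \<in> {1..n} \<Longrightarrow> V i \<noteq> {}" using nonempty unfolding nonempty_graph_def by blast

lemma cardV: "i \<in> {1..n} \<Longrightarrow> card (V i) > 0" using finV Vne by (simp add: card_gt_0_iff)

lemma alpha_pos: "i \<in> {1..n} \<Longrightarrow> indep_number (V i) (E i) > 0"
proof -
  assume i: "i \<in> {1..n}"
  obtain a where a: "a \<in> V i" using Vne[OF i] by blast
  have "independent_set (V i) (E i) {a}" using graphs[OF i] a unfolding independent_set_def simple_graph_def by auto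
  then have "card {a} \<le> indep_number (V i) (E i)" using card_le_indep finV[OF i] by blast
  then show ?thesis by simp
qed

lemma rat_eq: "i \<in> {1..l} \<Longrightarrow> rat i = r" using eq_first unfolding rat_def by blast

lemma r_pos: "r > 0"
proof -
  have "1 \<in> {1..n}" using l_range by auto
  then show ?thesis unfolding rat_def using alpha_pos cardV by simp
qed

lemma rat_lt_aux: "k < n - l \<Longrightarrow> rat (l + 1 + k) < r"
proof (induction k)
  case 0
  have "rat (l+1) < rat l" using gap unfolding rat_def by simp
  moreover have "rat l = r" using rat_eq[of l] l_range by simp
  ultimately show ?case by simp
next
  case (Suc k)
  then have "l + 1 + k \<in> {l+1..<n}" by auto
  then have "rat (l + 1 + k + 1) \<le> rat (l + 1 + k)" using decr unfolding rat_def by blast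
  then show ?case using Suc by simp
qed

lemma rat_lt: "i \<in> {l+1..n} \<Longrightarrow> rat i < r"
proof -
  assume i: "i \<in> {l+1..n}"
  then have "i = l + 1 + (i - l - 1)" "i - l - 1 < n - l" by auto
  then show ?thesis using rat_lt_aux by metis
qed

lemma rat_le: "i \<in> {1..n} \<Longrightarrow> rat i \<le> r"
proof -
  assume i: "i \<in> {1..n}"
  show ?thesis
  proof (cases "i \<le> l")
    case True then have "i \<in> {1..l}" using i by simp
    then show ?thesis using rat_eq[of i] by simp
  next
    case False then have "i \<in> {l+1..n}" using i by simp
    then show ?thesis using rat_lt[of i] by simp
  qed
qed

lemma sub_n: "m \<le> n \<Longrightarrow> i \<in> {1..m} \<Longrightarrow> i \<in> {1..n}" by auto

lemma goodV: "i \<in> {1..n} \<Longrightarrow> good (V i) (E i)" using graphs simple_good by blast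
lemma nbV: "i \<in> {1..n} \<Longrightarrow> nbhd_prop (V i) (E i)" using goodV vt nbhd_lemma by blast

lemma goodPV: "m \<le> n \<Longrightarrow> good (PV m) (PE m)"
proof (rule prod_good)
  show "finite {1..m}" by simp
  fix i assume "m \<le> n" "i \<in> {1..m}"
  then show "good (V i) (E i)" using goodV by simp
qed

lemma finPV: "m \<le> n \<Longrightarrow> finite (PV m)" using goodPV unfolding good_def by blast

lemma vtPV: "m \<le> n \<Longrightarrow> vertex_transitive (PV m) (PE m)"
  by (rule prod_vt) (auto intro: vt)

lemma nbPV: "m \<le> n \<Longrightarrow> nbhd_prop (PV m) (PE m)"
  using goodPV vtPV nbhd_lemma by blast


lemma Suc_int: "{1..Suc m} = insert (Suc m) {1..m}" by auto

lemma iso: "m < n \<Longrightarrow> giso (PV (Suc m)) (PE (Suc m)) (PV m \<times> V (Suc m)) (pE (PE m) (E (Suc m)))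
     (\<lambda>x. (restrict x {1..m}, x (Suc m)))"
  using step_iso[of "Suc m" "{1..m}" V E] finPV[of "Suc m"] unfolding Suc_int by simp

lemma cardPV_Suc: "m < n \<Longrightarrow> card (PV (Suc m)) = card (PV m) * card (V (Suc m))"
proof -
  assume m: "m < n"
  interpret giso "PV (Suc m)" "PE (Suc m)" "PV m \<times> V (Suc m)" "pE (PE m) (E (Suc m))" "\<lambda>x. (restrict x {1..m}, x (Suc m))"
    using iso[OF m] .
  show ?thesis using bij_betw_same_card[OF bij] by (simp add: card_cartesian_product)
qed

lemma alpha_PV0: "indep_number (PV 0) (PE 0) = 0"
proof -
  have fin: "finite (PV 0)" using finPV[of 0] by simp
  obtain J where J: "max_independent_set (PV 0) (PE 0) J" using exists_max_indep[OF fin] by blast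
  have "J = {}"
  proof (rule ccontr)
    assume "J \<noteq> {}"
    then obtain u where "u \<in> J" by blast
    moreover have "PE 0 u u" unfolding prod_E_def by simp
    ultimately show False using J unfolding max_independent_set_def independent_set_def by blast
  qed
  then show ?thesis using J unfolding max_independent_set_def by simp
qed

lemma alpha_step:
  assumes m: "m < n"
  shows "indep_number (PV (Suc m)) (PE (Suc m)) =
     max (indep_number (PV m) (PE m) * card (V (Suc m))) (indep_number (V (Suc m)) (E (Suc m)) * card (PV m))"
proof -
  interpret giso "PV (Suc m)" "PE (Suc m)" "PV m \<times> V (Suc m)" "pE (PE m) (E (Suc m))" "\<lambda>x. (restrict x {1..m}, x (Suc m))"
    using iso[OF m] .
  have i: "Suc m \<in> {1..n}" using m by auto
  show ?thesis using indep_eq zhang_eq[OF goodPV goodV[OF i] nbPV nbV[OF i]] m by simp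
qed

lemma alpha_PV: "m \<le> n \<Longrightarrow> real (indep_number (PV m) (PE m)) = (if m = 0 then 0 else r) * real (card (PV m))"
proof (induction m)
  case 0 then show ?case using alpha_PV0 by simp
next
  case (Suc m)
  then have m: "m < n" by simp
  have i: "Suc m \<in> {1..n}" using m by auto
  define a where "a = real (indep_number (PV m) (PE m))"
  define P where "P = real (card (PV m))"
  define W where "W = real (card (V (Suc m)))"
  define b where "b = real (indep_number (V (Suc m)) (E (Suc m)))"
  have Wpos: "W > 0" unfolding W_def using cardV[OF i] by simp
  have b: "b = rat (Suc m) * W" unfolding b_def W_def rat_def using Wpos W_def by simp
  have a: "a = (if m = 0 then 0 else r) * P" unfolding a_def P_def using Suc m by simp
  have "real (indep_number (PV (Suc m)) (PE (Suc m))) = max (a * W) (b * P)"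
    unfolding a_def W_def b_def P_def using alpha_step[OF m] by (simp add: of_nat_max)
  also have "\<dots> = r * (P * W)"
  proof (cases "m = 0")
    case True
    have "P \<ge> 0" unfolding P_def by simp
    then show ?thesis using True a b r_pos Wpos by (simp add: max_def)
  next
    case False
    have "rat (Suc m) \<le> r" using rat_le[OF i] .
    moreover have "P \<ge> 0" unfolding P_def by simp
    ultimately have "rat (Suc m) * (W * P) \<le> r * (W * P)" using Wpos by (intro mult_right_mono) auto
    then show ?thesis using a b False by (simp add: max_def ac_simps)
  qed
  also have "\<dots> = r * real (card (PV (Suc m)))" unfolding P_def W_def using cardPV_Suc[OF m] by simp
  finally show ?case by simp
qed

end




context mctx begin

lemma PV_ne: "m \<le> n \<Longrightarrow> PV m \<noteq> {}"
proof -
  assume m: "m \<le> n"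
  have "restrict (\<lambda>i. SOME a. a \<in> V i) {1..m} \<in> PV m"
    unfolding prod_V_def restrict_PiE_iff
  proof
    fix i assume "i \<in> {1..m}"
    then have "V i \<noteq> {}" using Vne m by simp
    then show "(SOME a. a \<in> V i) \<in> V i" by (simp add: some_in_eq)
  qed
  then show ?thesis by blast
qed

lemma cardPV: "m \<le> n \<Longrightarrow> card (PV m) > 0"
  using finPV PV_ne by (simp add: card_gt_0_iff)

lemma cmp:
  assumes "l \<le> m" "m < n"
  shows "indep_number (V (Suc m)) (E (Suc m)) * card (PV m) < indep_number (PV m) (PE m) * card (V (Suc m))"
proof -
  have i: "Suc m \<in> {1..n}" "Suc m \<in> {l+1..n}" using assms by auto
  define P where "P = real (card (PV m))"
  define W where "W = real (card (V (Suc m)))"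
  have Ppos: "P > 0" unfolding P_def using cardPV assms by simp
  have Wpos: "W > 0" unfolding W_def using cardV[OF i(1)] by simp
  have m0: "m \<noteq> 0" using assms l_range by simp
  have 1: "real (indep_number (V (Suc m)) (E (Suc m))) = rat (Suc m) * W"
    unfolding rat_def W_def using Wpos W_def by simp
  have 2: "real (indep_number (PV m) (PE m)) = r * P"
    unfolding P_def using alpha_PV[of m] assms m0 by simp
  have "rat (Suc m) * (W * P) < r * (W * P)" using rat_lt[OF i(2)] Wpos Ppos by simp
  then have "real (indep_number (V (Suc m)) (E (Suc m)) * card (PV m)) < real (indep_number (PV m) (PE m) * card (V (Suc m)))"
    using 1 2 unfolding P_def W_def by (simp add: ac_simps)
  then show ?thesis by (simp only: of_nat_less_iff)
qed

lemma pre_step: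
  assumes "l \<le> m" "m < n"
  shows "{x \<in> PV (Suc m). (restrict x {1..m}, x (Suc m)) \<in> {y \<in> PV m. restrict y {1..l} \<in> T} \<times> V (Suc m)}
       = {x \<in> PV (Suc m). restrict x {1..l} \<in> T}"
proof -
  have rr: "restrict (restrict x {1..m}) {1..l} = restrict x {1..l}" for x :: "nat \<Rightarrow> 'a"
    using assms by (auto simp: restrict_def)
  have "x \<in> PV (Suc m) \<Longrightarrow> restrict x {1..m} \<in> PV m \<and> x (Suc m) \<in> V (Suc m)" for x
    unfolding prod_V_def by (auto simp: PiE_iff)
  then show ?thesis using rr by auto
qed

lemma lift:
  assumes lm: "l \<le> m" and mn: "m \<le> n" and T: "max_independent_set (PV l) (PE l) T"
  shows "max_independent_set (PV m) (PE m) {x \<in> PV m. restrict x {1..l} \<in> T}"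
  using lm mn
proof (induction m rule: dec_induct)
  case base
  have "T \<subseteq> PV l" using T unfolding max_independent_set_def independent_set_def by blast
  then have eqT: "{x \<in> PV l. restrict x {1..l} \<in> T} = T" unfolding prod_V_def by auto
  show ?case unfolding eqT by (rule T)
next
  case (step m)
  have m: "m < n" using step by simp
  have i: "Suc m \<in> {1..n}" using m by auto
  interpret giso "PV (Suc m)" "PE (Suc m)" "PV m \<times> V (Suc m)" "pE (PE m) (E (Suc m))" "\<lambda>x. (restrict x {1..m}, x (Suc m))"
    using iso[OF m] .
  have IH: "max_independent_set (PV m) (PE m) {x \<in> PV m. restrict x {1..l} \<in> T}"
    using step.IH[OF less_imp_le[OF m]] .
  have "max_independent_set (PV m \<times> V (Suc m)) (pE (PE m) (E (Suc m))) ({x \<in> PV m. restrict x {1..l} \<in> T} \<times> V (Suc m))"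
    using zhang_max[OF goodPV[of m] goodV[OF i] nbPV[of m] nbV[OF i] IH] cmp[OF step(1) m] m by simp
  then have "max_independent_set (PV (Suc m)) (PE (Suc m))
     {x \<in> PV (Suc m). (restrict x {1..m}, x (Suc m)) \<in> {y \<in> PV m. restrict y {1..l} \<in> T} \<times> V (Suc m)}"
    by (rule max_pre)
  then have "max_independent_set (PV (Suc m)) (PE (Suc m)) {x \<in> PV (Suc m). restrict x {1..l} \<in> T}"
    by (simp only: pre_step[OF step(1) m])
  then show ?case by blast
qed

lemma struct:
  assumes conn: "\<And>k. k \<in> {l+1..n} \<Longrightarrow> connected_graph (V k) (E k)"
    and lm: "l \<le> m" and mn: "m \<le> n"
  shows "max_independent_set (PV m) (PE m) S \<Longrightarrow> \<exists>T. max_independent_set (PV l) (PE l) T \<and> S = {x \<in> PV m. restrict x {1..l} \<in> T}"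
  using lm mn
proof (induction m arbitrary: S rule: dec_induct)
  case base
  have "S \<subseteq> PV l" using base unfolding max_independent_set_def independent_set_def by blast
  then have "{x \<in> PV l. restrict x {1..l} \<in> S} = S" unfolding prod_V_def by auto
  then show ?case using base by metis
next
  case (step m)
  have m: "m < n" using step by simp
  have i: "Suc m \<in> {1..n}" "Suc m \<in> {l+1..n}" using m step(1) by auto
  interpret giso "PV (Suc m)" "PE (Suc m)" "PV m \<times> V (Suc m)" "pE (PE m) (E (Suc m))" "\<lambda>x. (restrict x {1..m}, x (Suc m))"
    using iso[OF m] .
  have Smax: "max_independent_set (PV (Suc m)) (PE (Suc m)) S" using step by simp
  have mle: "m \<le> n" using m by simp
  have img: "max_independent_set (PV m \<times> V (Suc m)) (pE (PE m) (E (Suc m))) ((\<lambda>x. (restrict x {1..m}, x (Suc m))) ` S)"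
    by (rule max_img[OF Smax])
  then obtain J where J: "max_independent_set (PV m) (PE m) J"
    and eq: "(\<lambda>x. (restrict x {1..m}, x (Suc m))) ` S = J \<times> V (Suc m)"
    using zhang_struct[OF goodPV[OF mle] goodV[OF i(1)] nbPV[OF mle] nbV[OF i(1)] img cmp[OF step(1) m] conn[OF i(2)]]
    by blast
  obtain T where T: "max_independent_set (PV l) (PE l) T" and JT: "J = {x \<in> PV m. restrict x {1..l} \<in> T}"
    using step.IH[OF J mle] by blast
  have "S \<subseteq> PV (Suc m)" using Smax unfolding max_independent_set_def independent_set_def by blast
  then have "S = {x \<in> PV (Suc m). (restrict x {1..m}, x (Suc m)) \<in> (\<lambda>x. (restrict x {1..m}, x (Suc m))) ` S}"
    by (rule pre_img)
  also have "\<dots> = {x \<in> PV (Suc m). restrict x {1..l} \<in> T}"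
    unfolding eq JT by (rule pre_step[OF step(1) m])
  finally show ?case using T by blast
qed

end




lemma upd_PiE2: "y \<in> PiE K V \<Longrightarrow> i \<in> K \<Longrightarrow> a \<in> V i \<Longrightarrow> y(i := a) \<in> PiE K V"
  unfolding PiE_iff extensional_def by auto

lemma prod_split2:
  assumes "finite I" "a \<in> I" "b \<in> I" "a \<noteq> b"
  shows "(\<Prod>i\<in>I. h i) = h a * h b * (\<Prod>i\<in>I - {a} - {b}. (h i :: nat))"
proof -
  have "(\<Prod>i\<in>I. h i) = h a * (\<Prod>i\<in>I - {a}. h i)" using assms by (simp add: prod.remove)
  also have "(\<Prod>i\<in>I - {a}. h i) = h b * (\<Prod>i\<in>I - {a} - {b}. h i)"
    using assms by (intro prod.remove) auto
  finally show ?thesis by (simp add: ac_simps)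
qed

context mctx begin

lemma normal_n_iff:
  "MIS_normal {1..n} V E \<longleftrightarrow> (\<forall>S. max_independent_set (PV n) (PE n) S \<longrightarrow>
     (\<exists>i\<in>{1..n}. \<exists>T. independent_set (V i) (E i) T \<and> S = {x \<in> PV n. x i \<in> T}))"
proof -
  have "card {1..n} \<noteq> 1" using l_range by simp
  then show ?thesis unfolding MIS_normal_def by simp
qed

lemma PV_edge: "m \<le> n \<Longrightarrow> \<exists>x\<in>PV m. \<exists>y\<in>PV m. PE m x y"
proof -
  assume m: "m \<le> n"
  have "\<forall>i\<in>{1..m}. \<exists>p. fst p \<in> V i \<and> snd p \<in> V i \<and> E i (fst p) (snd p)"
    using nonempty m unfolding nonempty_graph_def by fastforce
  then obtain p where p: "\<And>i. i \<in> {1..m} \<Longrightarrow> fst (p i) \<in> V i \<and> snd (p i) \<in> V i \<and> E i (fst (p i)) (snd (p i))"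
    by metis
  define x where "x = restrict (\<lambda>i. fst (p i)) {1..m}"
  define y where "y = restrict (\<lambda>i. snd (p i)) {1..m}"
  have "x \<in> PV m" "y \<in> PV m" unfolding x_def y_def prod_V_def restrict_PiE_iff using p by auto
  moreover have "PE m x y" unfolding prod_E_def x_def y_def using p by auto
  ultimately show ?thesis by blast
qed

lemma not_all_indep: "m \<le> n \<Longrightarrow> \<not> independent_set (PV m) (PE m) (PV m)"
  using PV_edge unfolding independent_set_def by blast

definition "merge y z = (\<lambda>j. if j \<in> {1..l} then y j else z j)"

lemma merge_PV: "y \<in> PV l \<Longrightarrow> z \<in> PV n \<Longrightarrow> merge y z \<in> PV n"
proof -
  assume y: "y \<in> PV l" and z: "z \<in> PV n"
  have 1: "\<forall>j\<in>{1..n}. merge y z j \<in> V j"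
  proof
    fix j assume j: "j \<in> {1..n}"
    show "merge y z j \<in> V j"
    proof (cases "j \<in> {1..l}")
      case True then show ?thesis using y unfolding merge_def prod_V_def by auto
    next
      case False then show ?thesis using z j unfolding merge_def prod_V_def by auto
    qed
  qed
  have 2: "merge y z \<in> extensional {1..n}"
    unfolding extensional_def
  proof (intro CollectI allI impI)
    fix j assume j: "j \<notin> {1..n}"
    then have "j \<notin> {1..l}" using l_range by auto
    then show "merge y z j = undefined" using z j unfolding merge_def prod_V_def by (auto simp: PiE_iff extensional_def)
  qed
  show ?thesis using 1 2 unfolding prod_V_def PiE_iff by blast
qed

lemma merge_restrict: "y \<in> PV l \<Longrightarrow> restrict (merge y z) {1..l} = y"
proof (rule ext)
  fix j assume y: "y \<in> PV l"
  show "restrict (merge y z) {1..l} j = y j"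
  proof (cases "j \<in> {1..l}")
    case True then show ?thesis unfolding merge_def by simp
  next
    case False then show ?thesis using y unfolding prod_V_def by (auto simp: PiE_iff extensional_def)
  qed
qed

lemma merge_out: "j \<notin> {1..l} \<Longrightarrow> merge y z j = z j"
  unfolding merge_def by (rule if_not_P)

lemma merge_in: "j \<in> {1..l} \<Longrightarrow> merge y z j = y j"
  unfolding merge_def by (rule if_P)

lemma restrict_PV: "x \<in> PV n \<Longrightarrow> restrict x {1..l} \<in> PV l"
  unfolding prod_V_def using l_range by (auto simp: PiE_iff)

lemma backward:
  assumes H0: "MIS_normal {1..l} V E"
    and conn: "\<And>k. k \<in> {l+1..n} \<Longrightarrow> connected_graph (V k) (E k)"
  shows "MIS_normal {1..n} V E"
  unfolding normal_n_iff
proof (intro allI impI)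
  fix S assume S: "max_independent_set (PV n) (PE n) S"
  obtain T where T: "max_independent_set (PV l) (PE l) T" and ST: "S = {x \<in> PV n. restrict x {1..l} \<in> T}"
    using struct[OF conn _ _ S] l_range by auto
  have TV: "T \<subseteq> PV l" using T unfolding max_independent_set_def independent_set_def by blast
  show "\<exists>i\<in>{1..n}. \<exists>T. independent_set (V i) (E i) T \<and> S = {x \<in> PV n. x i \<in> T}"
  proof (cases "l = 1")
    case True
    define T1 where "T1 = (\<lambda>y. y 1) ` T"
    have "independent_set (V 1) (E 1) T1"
      unfolding independent_set_def
    proof (intro conjI ballI)
      show "T1 \<subseteq> V 1" unfolding T1_def using TV True unfolding prod_V_def by auto
      fix a b assume a: "a \<in> T1" and b: "b \<in> T1"
      then obtain y y' where y: "y \<in> T" "a = y 1" and y': "y' \<in> T" "b = y' 1" unfolding T1_def by auto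
      show "\<not> E 1 a b"
      proof
        assume "E 1 a b"
        then have "PE l y y'" unfolding prod_E_def using True y y' by auto
        then show False using T y y' unfolding max_independent_set_def independent_set_def by blast
      qed
    qed
    moreover have "S = {x \<in> PV n. x 1 \<in> T1}"
      unfolding ST
    proof (intro Collect_cong refl)
      fix x
      show "(x \<in> PV n \<and> restrict x {1..l} \<in> T) \<longleftrightarrow> (x \<in> PV n \<and> x 1 \<in> T1)"
      proof (intro iffI conjI)
        assume "x \<in> PV n \<and> restrict x {1..l} \<in> T"
        then have "restrict x {1..l} \<in> T" by blast
        moreover have "restrict x {1..l} 1 = x 1" using True by simp
        ultimately show "x 1 \<in> T1" unfolding T1_def by (metis rev_image_eqI)
      next
        assume h: "x \<in> PV n \<and> x 1 \<in> T1"
        then obtain y where y: "y \<in> T" "y 1 = x 1" unfolding T1_def by auto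
        have "restrict x {1..l} = y"
        proof (rule PiE_ext)
          show "restrict x {1..l} \<in> PiE {1..l} V" using restrict_PV h unfolding prod_V_def by blast
          show "y \<in> PiE {1..l} V" using y TV unfolding prod_V_def by blast
          fix i assume "i \<in> {1..l}"
          then show "restrict x {1..l} i = y i" using True y by simp
        qed
        then show "restrict x {1..l} \<in> T" using y by simp
      qed auto
    qed
    ultimately show ?thesis using ST l_range by auto
  next
    case False
    then have "card {1..l} \<noteq> 1" by simp
    then obtain i T' where i: "i \<in> {1..l}" and T': "independent_set (V i) (E i) T'"
      and TT: "T = {y \<in> PV l. y i \<in> T'}"
      using H0 T unfolding MIS_normal_def by blast
    have "S = {x \<in> PV n. x i \<in> T'}"
      unfolding ST TT using restrict_PV i by auto
    moreover have "i \<in> {1..n}" using i l_range by auto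
    ultimately show ?thesis using T' by blast
  qed
qed

end




context mctx begin

lemma forward_a:
  assumes Nor: "MIS_normal {1..n} V E"
  shows "MIS_normal {1..l} V E"
proof (cases "l = 1")
  case True then show ?thesis unfolding MIS_normal_def by simp
next
  case False
  have nor: "\<And>S. max_independent_set (PV n) (PE n) S \<Longrightarrow>
     (\<exists>i\<in>{1..n}. \<exists>T. independent_set (V i) (E i) T \<and> S = {x \<in> PV n. x i \<in> T})"
    using Nor unfolding normal_n_iff by blast
  have "\<forall>T. max_independent_set (PV l) (PE l) T \<longrightarrow>
        (\<exists>i\<in>{1..l}. \<exists>T'. independent_set (V i) (E i) T' \<and> T = {x \<in> PV l. x i \<in> T'})"
  proof (intro allI impI)
    fix T assume T: "max_independent_set (PV l) (PE l) T"
    have TV: "T \<subseteq> PV l" using T unfolding max_independent_set_def independent_set_def by blast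
    define S where "S = {x \<in> PV n. restrict x {1..l} \<in> T}"
    have S: "max_independent_set (PV n) (PE n) S" unfolding S_def using lift[OF _ _ T] l_range by simp
    obtain i T' where i: "i \<in> {1..n}" and T': "independent_set (V i) (E i) T'"
      and ST: "S = {x \<in> PV n. x i \<in> T'}" using nor[OF S] by blast
    obtain z0 where z0: "z0 \<in> PV n" using PV_ne[of n] by blast
    have memS: "\<And>x. x \<in> S \<longleftrightarrow> x \<in> PV n \<and> x i \<in> T'" using ST by blast
    show "\<exists>i\<in>{1..l}. \<exists>T'. independent_set (V i) (E i) T' \<and> T = {x \<in> PV l. x i \<in> T'}"
    proof (cases "i \<in> {1..l}")
      case True
      have "T = {y \<in> PV l. y i \<in> T'}"
      proof (intro set_eqI iffI)
        fix y assume y: "y \<in> T"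
        then have yP: "y \<in> PV l" using TV by blast
        have "merge y z0 \<in> S" unfolding S_def using merge_PV[OF yP z0] merge_restrict[OF yP] y by simp
        then have "merge y z0 i \<in> T'" using memS by blast
        moreover have "merge y z0 i = y i" by (rule merge_in[OF True])
        ultimately have "y i \<in> T'" by simp
        then show "y \<in> {y \<in> PV l. y i \<in> T'}" using yP by simp
      next
        fix y assume y: "y \<in> {y \<in> PV l. y i \<in> T'}"
        then have yP: "y \<in> PV l" by blast
        have e: "merge y z0 i = y i" by (rule merge_in[OF True])
        have "merge y z0 i \<in> T'" unfolding e using y by blast
        then have "merge y z0 \<in> S" using memS merge_PV[OF yP z0] by blast
        then show "y \<in> T" unfolding S_def using merge_restrict[OF yP] by simp
      qed
      then show ?thesis using True T' by blast
    next
      case False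
      have aPV: "real (indep_number (PV l) (PE l)) = r * real (card (PV l))"
        using alpha_PV[of l] l_range by simp
      have "real (indep_number (PV l) (PE l)) > 0" unfolding aPV using r_pos cardPV[of l] l_range by simp
      then have "card T > 0" using T unfolding max_independent_set_def by simp
      then obtain y0 where y0: "y0 \<in> T" by (metis card.empty ex_in_conv less_irrefl)
      have y0P: "y0 \<in> PV l" using y0 TV by blast
      have "PV n \<subseteq> S"
      proof
        fix x assume x: "x \<in> PV n"
        have "merge y0 x \<in> S" unfolding S_def using merge_PV[OF y0P x] merge_restrict[OF y0P] y0 by simp
        then have "merge y0 x i \<in> T'" using memS by blast
        moreover have "merge y0 x i = x i" by (rule merge_out[OF False])
        ultimately have "x i \<in> T'" by simp
        then show "x \<in> S" using memS x by blast
      qed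
      moreover have "S \<subseteq> PV n" unfolding S_def by blast
      ultimately have "S = PV n" by blast
      then have "independent_set (PV n) (PE n) (PV n)" using S unfolding max_independent_set_def by simp
      then show ?thesis using not_all_indep[of n] by simp
    qed
  qed
  moreover have "card {1..l} \<noteq> 1" using False by simp
  ultimately show ?thesis unfolding MIS_normal_def by blast
qed

end




lemma PiE_upd2:
  assumes ab: "a \<noteq> b" and a: "a \<in> I" and b: "b \<in> I" and X: "X \<subseteq> V a" and Y: "Y \<subseteq> V b"
  shows "{x \<in> PiE I V. x b \<in> Y \<and> x a \<in> X} = PiE I ((V(a := X))(b := Y))"
proof (intro set_eqI iffI)
  fix x assume x: "x \<in> {x \<in> PiE I V. x b \<in> Y \<and> x a \<in> X}"
  have "\<forall>i\<in>I. x i \<in> ((V(a := X))(b := Y)) i"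
  proof
    fix i assume i: "i \<in> I"
    show "x i \<in> ((V(a := X))(b := Y)) i"
      using x i ab by (cases "i = b"; cases "i = a") (auto simp: PiE_iff)
  qed
  moreover have "x \<in> extensional I" using x by (auto simp: PiE_iff)
  ultimately show "x \<in> PiE I ((V(a := X))(b := Y))" by (simp add: PiE_iff)
next
  fix x assume x: "x \<in> PiE I ((V(a := X))(b := Y))"
  then have xi: "\<And>i. i \<in> I \<Longrightarrow> x i \<in> ((V(a := X))(b := Y)) i" and ext: "x \<in> extensional I"
    by (auto simp: PiE_iff)
  have "\<forall>i\<in>I. x i \<in> V i"
  proof
    fix i assume i: "i \<in> I"
    show "x i \<in> V i"
      using xi[OF i] X Y ab by (cases "i = b"; cases "i = a") auto
  qed
  moreover have "x b \<in> Y" using xi[OF b] by simp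
  moreover have "x a \<in> X" using xi[OF a] ab by simp
  ultimately show "x \<in> {x \<in> PiE I V. x b \<in> Y \<and> x a \<in> X}" using ext by (simp add: PiE_iff)
qed

context mctx begin

lemma two_max:
  obtains J J' where "max_independent_set (V 1) (E 1) J" "max_independent_set (V 1) (E 1) J'" "J \<noteq> J'"
proof -
  have one: "1 \<in> {1..n}" using l_range by auto
  have fin: "finite (V 1)" using finV[OF one] .
  obtain J where J: "max_independent_set (V 1) (E 1) J" using exists_max_indep[OF fin] by blast
  have JV: "J \<subseteq> V 1" and Jind: "independent_set (V 1) (E 1) J" and cJ: "card J = indep_number (V 1) (E 1)"
    using J unfolding max_independent_set_def independent_set_def by auto
  have "\<exists>f. graph_automorphism (V 1) (E 1) f \<and> f ` J \<noteq> J"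
  proof (rule ccontr)
    assume no: "\<not> (\<exists>f. graph_automorphism (V 1) (E 1) f \<and> f ` J \<noteq> J)"
    have "card J > 0" using cJ alpha_pos[OF one] by simp
    then obtain a where a: "a \<in> J" by (metis card.empty ex_in_conv less_irrefl)
    have "V 1 \<subseteq> J"
    proof
      fix b assume b: "b \<in> V 1"
      obtain f where f: "graph_automorphism (V 1) (E 1) f" "f a = b"
        using vt[OF one] a JV b unfolding vertex_transitive_def by blast
      have "f ` J = J" using no f(1) by blast
      then show "b \<in> J" using a f(2) by blast
    qed
    then have "J = V 1" using JV by blast
    moreover obtain u w where "u \<in> V 1" "w \<in> V 1" "E 1 u w" using nonempty[OF one] unfolding nonempty_graph_def by blast
    ultimately show False using Jind unfolding independent_set_def by blast
  qed
  then obtain f where f: "graph_automorphism (V 1) (E 1) f" and fJ: "f ` J \<noteq> J" by blast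
  have bf: "bij_betw f (V 1) (V 1)" and ef: "\<And>u w. u \<in> V 1 \<Longrightarrow> w \<in> V 1 \<Longrightarrow> E 1 u w \<longleftrightarrow> E 1 (f u) (f w)"
    using f unfolding graph_automorphism_def by auto
  have inj: "inj_on f J" using bij_betw_imp_inj_on[OF bf] JV by (rule inj_on_subset)
  have "independent_set (V 1) (E 1) (f ` J)"
    unfolding independent_set_def
  proof (intro conjI ballI)
    show "f ` J \<subseteq> V 1" using bij_betw_imp_surj_on[OF bf] JV by blast
    fix x y assume "x \<in> f ` J" "y \<in> f ` J"
    then obtain u w where uw: "u \<in> J" "w \<in> J" "x = f u" "y = f w" by auto
    then have "u \<in> V 1" "w \<in> V 1" using JV by auto
    then have "E 1 x y \<longleftrightarrow> E 1 u w" using ef uw by simp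
    then show "\<not> E 1 x y" using Jind uw unfolding independent_set_def by blast
  qed
  moreover have "card (f ` J) = indep_number (V 1) (E 1)" using card_image[OF inj] cJ by simp
  ultimately have "max_independent_set (V 1) (E 1) (f ` J)" unfolding max_independent_set_def by blast
  then show ?thesis using that J fJ by metis
qed

lemma forward_b:
  assumes Nor: "MIS_normal {1..n} V E" and k: "k \<in> {l+1..n}"
  shows "connected_graph (V k) (E k)"
proof (rule ccontr)
  assume nc: "\<not> connected_graph (V k) (E k)"
  define R where "R = (\<lambda>x y. x \<in> V k \<and> y \<in> V k \<and> E k x y)"
  obtain u w where u: "u \<in> V k" and w: "w \<in> V k" and nuw: "\<not> R\<^sup>*\<^sup>* u w"
    using nc unfolding connected_graph_def R_def by blast
  define C where "C = {z \<in> V k. R\<^sup>*\<^sup>* u z}"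
  have uC: "u \<in> C" unfolding C_def using u by simp
  have wC: "w \<notin> C" unfolding C_def using nuw by simp
  have kn: "k \<in> {1..n}" and k1: "k \<noteq> 1" using k l_range by auto
  have one: "1 \<in> {1..n}" using l_range by auto
  have symk: "\<And>x y. x \<in> V k \<Longrightarrow> y \<in> V k \<Longrightarrow> E k x y \<Longrightarrow> E k y x"
    using goodV[OF kn] unfolding good_def by blast
  have clos: "\<And>x y. x \<in> V k \<Longrightarrow> y \<in> V k \<Longrightarrow> E k x y \<Longrightarrow> x \<in> C \<longleftrightarrow> y \<in> C"
  proof -
    fix x y assume x: "x \<in> V k" and y: "y \<in> V k" and e: "E k x y"
    have "R x y" "R y x" unfolding R_def using x y e symk by auto
    show "x \<in> C \<longleftrightarrow> y \<in> C"
    proof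
      assume "x \<in> C"
      then have "R\<^sup>*\<^sup>* u x" unfolding C_def by blast
      then have "R\<^sup>*\<^sup>* u y" using \<open>R x y\<close> by (rule rtranclp.rtrancl_into_rtrancl)
      then show "y \<in> C" unfolding C_def using y by blast
    next
      assume "y \<in> C"
      then have "R\<^sup>*\<^sup>* u y" unfolding C_def by blast
      then have "R\<^sup>*\<^sup>* u x" using \<open>R y x\<close> by (rule rtranclp.rtrancl_into_rtrancl)
      then show "x \<in> C" unfolding C_def using x by blast
    qed
  qed
  have CV: "C \<subseteq> V k" unfolding C_def by blast
  obtain J J' where J: "max_independent_set (V 1) (E 1) J" and J': "max_independent_set (V 1) (E 1) J'"
    and JJ: "J \<noteq> J'" using two_max by blast
  have JV: "J \<subseteq> V 1" "independent_set (V 1) (E 1) J" and J'V: "J' \<subseteq> V 1" "independent_set (V 1) (E 1) J'"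
    using J J' unfolding max_independent_set_def independent_set_def by auto
  have cJJ: "card J = card J'" "card J = indep_number (V 1) (E 1)"
    using J J' unfolding max_independent_set_def by auto
  have fin1: "finite (V 1)" using finV[OF one] .
  obtain a where a: "a \<in> J" "a \<notin> J'"
  proof -
    have "\<not> J \<subseteq> J'"
    proof
      assume "J \<subseteq> J'"
      then have "J = J'" using card_subset_eq[OF finite_subset[OF J'V(1) fin1]] cJJ(1) by blast
      then show False using JJ by simp
    qed
    then show ?thesis using that by blast
  qed
  obtain c where c: "c \<in> V 1" "c \<notin> J"
  proof -
    obtain x y where "x \<in> V 1" "y \<in> V 1" "E 1 x y" using nonempty[OF one] unfolding nonempty_graph_def by blast
    then have "\<not> V 1 \<subseteq> J" using JV(2) unfolding independent_set_def by blast
    then show ?thesis using that by blast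
  qed
  define S where "S = {x \<in> PV n. (x k \<in> C \<and> x 1 \<in> J) \<or> (x k \<notin> C \<and> x 1 \<in> J')}"
  have Sind: "independent_set (PV n) (PE n) S"
    unfolding independent_set_def
  proof (intro conjI ballI)
    show "S \<subseteq> PV n" unfolding S_def by blast
    fix x y assume x: "x \<in> S" and y: "y \<in> S"
    show "\<not> PE n x y"
    proof
      assume e: "PE n x y"
      have e1: "E 1 (x 1) (y 1)" and ek: "E k (x k) (y k)" using e one kn unfolding prod_E_def by auto
      have xk: "x k \<in> V k" and yk: "y k \<in> V k" using x y kn unfolding S_def prod_V_def by auto
      have iff: "x k \<in> C \<longleftrightarrow> y k \<in> C" using clos[OF xk yk ek] .
      show False
      proof (cases "x k \<in> C")
        case True
        then have "x 1 \<in> J" "y 1 \<in> J" using x y iff unfolding S_def by auto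
        then show False using JV(2) e1 unfolding independent_set_def by blast
      next
        case False
        then have "x 1 \<in> J'" "y 1 \<in> J'" using x y iff unfolding S_def by auto
        then show False using J'V(2) e1 unfolding independent_set_def by blast
      qed
    qed
  qed
  define Q where "Q = (\<Prod>i\<in>{1..n} - {1} - {k}. card (V i))"
  have S1: "{x \<in> PV n. x k \<in> C \<and> x 1 \<in> J} = PiE {1..n} ((V(1 := J))(k := C))"
    unfolding prod_V_def using PiE_upd2[of 1 k "{1..n}" J V C] JV(1) CV k1 one kn by simp
  have S2: "{x \<in> PV n. x k \<notin> C \<and> x 1 \<in> J'} = PiE {1..n} ((V(1 := J'))(k := V k - C))"
  proof -
    have "{x \<in> PV n. x k \<notin> C \<and> x 1 \<in> J'} = {x \<in> PiE {1..n} V. x k \<in> V k - C \<and> x 1 \<in> J'}"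
    proof (intro Collect_cong)
      fix x show "(x \<in> PV n \<and> x k \<notin> C \<and> x 1 \<in> J') = (x \<in> PiE {1..n} V \<and> x k \<in> V k - C \<and> x 1 \<in> J')"
        using PiE_mem[of x "{1..n}" V k] kn unfolding prod_V_def by blast
    qed
    also have "\<dots> = PiE {1..n} ((V(1 := J'))(k := V k - C))"
      using PiE_upd2[of 1 k "{1..n}" J' V "V k - C"] J'V(1) k1 one kn by simp
    finally show ?thesis .
  qed
  have cardgen: "\<And>X Y. card (PiE {1..n} ((V(1 := X))(k := Y))) = card X * card Y * Q"
  proof -
    fix X Y
    have "card (PiE {1..n} ((V(1 := X))(k := Y))) = (\<Prod>i\<in>{1..n}. card (((V(1 := X))(k := Y)) i))"
      by (rule card_PiE) simp
    also have "\<dots> = card (((V(1 := X))(k := Y)) 1) * card (((V(1 := X))(k := Y)) k) *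
        (\<Prod>i\<in>{1..n} - {1} - {k}. card (((V(1 := X))(k := Y)) i))"
      by (rule prod_split2) (use one kn k1 in auto)
    also have "(\<Prod>i\<in>{1..n} - {1} - {k}. card (((V(1 := X))(k := Y)) i)) = Q"
      unfolding Q_def by (rule prod.cong) auto
    also have "card (((V(1 := X))(k := Y)) 1) * card (((V(1 := X))(k := Y)) k) * Q = card X * card Y * Q"
      using k1 by simp
    finally show "card (PiE {1..n} ((V(1 := X))(k := Y))) = card X * card Y * Q" .
  qed
  have cardPVn: "card (PV n) = card (V 1) * card (V k) * Q"
  proof -
    have eqV: "(V(1 := V 1))(k := V k) = V" by simp
    have "card (PV n) = card (PiE {1..n} ((V(1 := V 1))(k := V k)))" unfolding eqV prod_V_def ..
    then show ?thesis using cardgen[of "V 1" "V k"] by (simp only:)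
  qed
  have finVk: "finite (V k)" using finV[OF kn] .
  have cardC: "card C + card (V k - C) = card (V k)"
    using card_Diff_subset[OF finite_subset[OF CV finVk] CV] card_mono[OF finVk CV] by simp
  have "S = {x \<in> PV n. x k \<in> C \<and> x 1 \<in> J} \<union> {x \<in> PV n. x k \<notin> C \<and> x 1 \<in> J'}" unfolding S_def by blast
  moreover have "{x \<in> PV n. x k \<in> C \<and> x 1 \<in> J} \<inter> {x \<in> PV n. x k \<notin> C \<and> x 1 \<in> J'} = {}" by blast
  moreover have "finite (PV n)" using finPV by simp
  ultimately have "card S = card {x \<in> PV n. x k \<in> C \<and> x 1 \<in> J} + card {x \<in> PV n. x k \<notin> C \<and> x 1 \<in> J'}"
    by (simp add: card_Un_disjoint)
  also have "\<dots> = card J * card C * Q + card J' * card (V k - C) * Q" unfolding S1 S2 cardgen ..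
  also have "\<dots> = card J * card C * Q + card J * card (V k - C) * Q" using cJJ(1) by simp
  also have "\<dots> = card J * (card C + card (V k - C)) * Q" by (simp add: algebra_simps)
  also have "\<dots> = card J * card (V k) * Q" using cardC by simp
  finally have cS: "card S = card J * card (V k) * Q" .
  have "real (indep_number (PV n) (PE n)) = r * real (card (PV n))" using alpha_PV[of n] l_range by simp
  also have "\<dots> = real (card J) * real (card (V k)) * real Q"
    unfolding cardPVn rat_def cJJ(2)[symmetric] using cardV[OF one] by simp
  finally have "indep_number (PV n) (PE n) = card S" unfolding cS by (simp only: of_nat_mult[symmetric] of_nat_eq_iff)
  then have Smax: "max_independent_set (PV n) (PE n) S" using Sind unfolding max_independent_set_def by simp
  obtain i T' where i: "i \<in> {1..n}" and ST: "S = {x \<in> PV n. x i \<in> T'}"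
    using Nor Smax unfolding normal_n_iff by blast
  have memS: "\<And>x. x \<in> S \<longleftrightarrow> x \<in> PV n \<and> x i \<in> T'" using ST by blast
  obtain z0 where z0: "z0 \<in> PV n" using PV_ne[of n] by blast
  define x where "x = (z0(1 := a))(k := u)"
  have xP: "x \<in> PV n" unfolding x_def prod_V_def
    using upd_PiE2[OF upd_PiE2[OF z0[unfolded prod_V_def] one] kn] a JV(1) u by blast
  have x1: "x 1 = a" and xk: "x k = u" unfolding x_def using k1 by auto
  have xS: "x \<in> S" unfolding S_def using xP x1 xk uC a by simp
  show False
  proof (cases "i = k")
    case True
    define y where "y = (z0(1 := c))(k := u)"
    have yP: "y \<in> PV n" unfolding y_def prod_V_def
      using upd_PiE2[OF upd_PiE2[OF z0[unfolded prod_V_def] one] kn] c u by blast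
    have y1: "y 1 = c" and yk: "y k = u" unfolding y_def using k1 by auto
    have "y \<notin> S" unfolding S_def using y1 yk uC c by simp
    moreover have "y i = x i" using True xk yk by simp
    moreover have "x i \<in> T'" using memS xS by blast
    ultimately show False using memS yP by auto
  next
    case False
    define y where "y = (z0(1 := a))(k := w)"
    have yP: "y \<in> PV n" unfolding y_def prod_V_def
      using upd_PiE2[OF upd_PiE2[OF z0[unfolded prod_V_def] one] kn] a JV(1) w by blast
    have y1: "y 1 = a" and yk: "y k = w" unfolding y_def using k1 by auto
    have "y \<notin> S" unfolding S_def using y1 yk wC a by simp
    moreover have "y i = x i" using False unfolding x_def y_def by simp
    moreover have "x i \<in> T'" using memS xS by blast
    ultimately show False using memS yP by auto
  qed
qed

end


theorem proposition3p1:
  fixes V :: "nat \<Rightarrow> 'a set" and E :: "nat \<Rightarrow> 'a \<Rightarrow> 'a \<Rightarrow> bool"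
    and n l :: nat
  assumes graphs: "\<And>i. i \<in> {1..n} \<Longrightarrow> simple_graph (V i) (E i)"
    and nonempty: "\<And>i. i \<in> {1..n} \<Longrightarrow> nonempty_graph (V i) (E i)"
    and vt: "\<And>i. i \<in> {1..n} \<Longrightarrow> vertex_transitive (V i) (E i)"
    and l_range: "1 \<le> l" "l < n"
    and half: "real (indep_number (V 1) (E 1)) / real (card (V 1)) \<le> 1 / 2"
    and eq_first: "\<And>i. i \<in> {1..l} \<Longrightarrow>
        real (indep_number (V i) (E i)) / real (card (V i))
        = real (indep_number (V 1) (E 1)) / real (card (V 1))"
    and gap: "real (indep_number (V l) (E l)) / real (card (V l))
        > real (indep_number (V (l+1)) (E (l+1))) / real (card (V (l+1)))"
    and decr: "\<And>i. i \<in> {l+1..<n} \<Longrightarrow>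
        real (indep_number (V i) (E i)) / real (card (V i))
        \<ge> real (indep_number (V (i+1)) (E (i+1))) / real (card (V (i+1)))"
  shows "MIS_normal {1..n} V E \<longleftrightarrow>
           (MIS_normal {1..l} V E \<and> (\<forall>i\<in>{l+1..n}. connected_graph (V i) (E i)))"
proof -
  interpret mctx V E n l
    by (rule mctx.intro[OF graphs nonempty vt l_range eq_first gap decr])
  show ?thesis
  proof
    assume N: "MIS_normal {1..n} V E"
    show "MIS_normal {1..l} V E \<and> (\<forall>i\<in>{l+1..n}. connected_graph (V i) (E i))"
      using forward_a[OF N] forward_b[OF N] by blast
  next
    assume h: "MIS_normal {1..l} V E \<and> (\<forall>i\<in>{l+1..n}. connected_graph (V i) (E i))"
    show "MIS_normal {1..n} V E" using h backward by blast
  qed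
qed

end
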